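(* Let $\mathbb{F}$ be a field with $\mathrm{char}(\mathbb{F})\neq 2,3$. An ideal $I$ of $\hat{\mathcal{H}}$ has finite codimension in $\hat{\mathcal{H}}$ if and only if it is not contained in the ideal $J$. Every non-zero ideal of $\hat{\mathcal{H}}$ which is contained in $J$ has finite codimension in $J$.
   Context: Notation: $\mathbb{N}=\{1,2,3,\dots\}$, $3\mathbb{N}=\{3,6,9,\dots\}$; for $r\in\mathbb{Z}$, $\bar r=r+3\mathbb{Z}\in\mathbb{Z}_3$. The algebra $\hat{\mathcal{H}}$ is the commutative $\mathbb{F}$-algebra with basis $\{a_i:i\in\mathbb{Z}\}\cup\{s_j:j\in\mathbb{N}\}\cup\{p_{\bar r,k}:\bar r\in\{\bar1,\bar2\},\ k\in 3\mathbb{N}\}$, where $s_0=0$, $p_{\bar r,j}=0$ for all $\bar r$ whenever $j\notin 3\mathbb{N}$, $p_{\bar 0,j}=-p_{\bar1,j}-p_{\bar2,j}$, $z_{\bar r,j}=p_{\bar r+\bar1,j}-p_{\bar r-\bar1,j}$, and for $i,i'\in\mathbb{Z}$, $j,l\in\mathbb{N}$, $h,k\in3\mathbb{N}$, $\bar r,\bar t\in\mathbb{Z}_3$: (H1) $a_ia_{i'}=\tfrac12(a_i+a_{i'})+s_{|i-i'|}+z_{\bar\imath,|i-i'|}$; (H2) $a_is_j=-\tfrac34a_i+\tfrac38(a_{i-j}+a_{i+j})+\tfrac32 s_j-z_{\bar\imath,j}$; (H3) $a_ip_{\bar r,k}=\tfrac32p_{\bar r,k}-p_{-(\bar\imath+\bar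 r),k}$; (H4) $s_js_l=\tfrac34(s_j+s_l)-\tfrac38(s_{|j-l|}+s_{j+l})$; (H5) $s_jp_{\bar r,k}=\tfrac34(p_{\bar r,j}+p_{\bar r,k})-\tfrac38(p_{\bar r,|j-k|}+p_{\bar r,j+k})$; (H6) $p_{\bar r,h}p_{\bar t,k}=\tfrac14(z_{-(\bar r+\bar t),h}+z_{-(\bar r+\bar t),k})-\tfrac18(z_{-(\bar r+\bar t),|h-k|}+z_{-(\bar r+\bar t),h+k})$. $J$ is the ideal $\langle p_{\bar1,j},p_{\bar2,j}: j\in3\mathbb{N}\rangle$ of $\hat{\mathcal{H}}$. *)

theory Defs
  imports Main "HOL-Library.Function_Algebras"
begin

text \<open>Index set of the basis of the algebra H-hat:
  A i  stands for a_i (i an integer),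
  S j  stands for s_j (valid only for j >= 1),
  P r k stands for p_{r,k} (valid only for r in {1,2} and k in 3N).\<close>

datatype hidx = A int | S nat | P int nat

fun valid_idx :: "hidx \<Rightarrow> bool" where
  "valid_idx (A i) = True"
| "valid_idx (S j) = (j \<ge> 1)"
| "valid_idx (P r k) = ((r = 1 \<or> r = 2) \<and> k > 0 \<and> 3 dvd k)"

definition Hvec :: "(hidx \<Rightarrow> 'a::field) set" where
  "Hvec = {f. finite {x. f x \<noteq> 0} \<and> (\<forall>x. f x \<noteq> 0 \<longrightarrow> valid_idx x)}"

definition ind :: "hidx \<Rightarrow> (hidx \<Rightarrow> 'a::field)" where
  "ind x = (\<lambda>y. if y = x then 1 else 0)"

definition smul :: "'a::field \<Rightarrow> (hidx \<Rightarrow> 'a) \<Rightarrow> (hidx \<Rightarrow> 'a)" where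
  "smul c f = (\<lambda>x. c * f x)"

definition ndist :: "nat \<Rightarrow> nat \<Rightarrow> nat" where
  "ndist j l = (if j \<le> l then l - j else j - l)"

text \<open>Generalised basis symbols, with the conventions of the paper:
  s_0 = 0; p_{r,j} = 0 for j not in 3N; p_{0,j} = - p_{1,j} - p_{2,j}; residues mod 3.\<close>

definition va :: "int \<Rightarrow> (hidx \<Rightarrow> 'a::field)" where
  "va i = ind (A i)"

definition vs :: "nat \<Rightarrow> (hidx \<Rightarrow> 'a::field)" where
  "vs j = (if j = 0 then 0 else ind (S j))"

definition vp :: "int \<Rightarrow> nat \<Rightarrow> (hidx \<Rightarrow> 'a::field)" where
  "vp r k = (if 0 < k \<and> 3 dvd k then
       (if r mod 3 = 1 then ind (P 1 k)
        else if r mod 3 = 2 then ind (P 2 k)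
        else - ind (P 1 k) - ind (P 2 k))
     else 0)"

definition vz :: "int \<Rightarrow> nat \<Rightarrow> (hidx \<Rightarrow> 'a::field)" where
  "vz r j = vp (r + 1) j - vp (r - 1) j"

definition prodAA :: "int \<Rightarrow> int \<Rightarrow> (hidx \<Rightarrow> 'a::field)" where
  "prodAA i i' = smul (1/2) (va i + va i') + vs (nat \<bar>i - i'\<bar>) + vz i (nat \<bar>i - i'\<bar>)"

definition prodAS :: "int \<Rightarrow> nat \<Rightarrow> (hidx \<Rightarrow> 'a::field)" where
  "prodAS i j = smul (-(3/4)) (va i) + smul (3/8) (va (i - int j) + va (i + int j))
                + smul (3/2) (vs j) - vz i j"

definition prodAP :: "int \<Rightarrow> int \<Rightarrow> nat \<Rightarrow> (hidx \<Rightarrow> 'a::field)" where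
  "prodAP i r k = smul (3/2) (vp r k) - vp (-(i + r)) k"

definition prodSS :: "nat \<Rightarrow> nat \<Rightarrow> (hidx \<Rightarrow> 'a::field)" where
  "prodSS j l = smul (3/4) (vs j + vs l) - smul (3/8) (vs (ndist j l) + vs (j + l))"

definition prodSP :: "nat \<Rightarrow> int \<Rightarrow> nat \<Rightarrow> (hidx \<Rightarrow> 'a::field)" where
  "prodSP j r k = smul (3/4) (vp r j + vp r k) - smul (3/8) (vp r (ndist j k) + vp r (j + k))"

definition prodPP :: "int \<Rightarrow> nat \<Rightarrow> int \<Rightarrow> nat \<Rightarrow> (hidx \<Rightarrow> 'a::field)" where
  "prodPP r h t k = smul (1/4) (vz (-(r + t)) h + vz (-(r + t)) k)
                    - smul (1/8) (vz (-(r + t)) (ndist h k) + vz (-(r + t)) (h + k))"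

definition bprod :: "hidx \<Rightarrow> hidx \<Rightarrow> (hidx \<Rightarrow> 'a::field)" where
  "bprod x y = (case (x, y) of
      (A i, A i') \<Rightarrow> prodAA i i'
    | (A i, S j) \<Rightarrow> prodAS i j
    | (S j, A i) \<Rightarrow> prodAS i j
    | (A i, P r k) \<Rightarrow> prodAP i r k
    | (P r k, A i) \<Rightarrow> prodAP i r k
    | (S j, S l) \<Rightarrow> prodSS j l
    | (S j, P r k) \<Rightarrow> prodSP j r k
    | (P r k, S j) \<Rightarrow> prodSP j r k
    | (P r h, P t k) \<Rightarrow> prodPP r h t k)"

definition hmult :: "(hidx \<Rightarrow> 'a::field) \<Rightarrow> (hidx \<Rightarrow> 'a) \<Rightarrow> (hidx \<Rightarrow> 'a)" where
  "hmult f g = (\<lambda>x. \<Sum>u\<in>{u. f u \<noteq> 0}. \<Sum>v\<in>{v. g v \<noteq> 0}. f u * g v * bprod u v x)"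

definition is_ideal :: "(hidx \<Rightarrow> 'a::field) set \<Rightarrow> bool" where
  "is_ideal I \<longleftrightarrow> I \<subseteq> Hvec \<and> 0 \<in> I \<and>
     (\<forall>f\<in>I. \<forall>g\<in>I. f + g \<in> I) \<and>
     (\<forall>c. \<forall>f\<in>I. smul c f \<in> I) \<and>
     (\<forall>f\<in>I. \<forall>g\<in>Hvec. hmult g f \<in> I)"

definition Jgens :: "(hidx \<Rightarrow> 'a::field) set" where
  "Jgens = {vp r j | r j. (r = 1 \<or> r = 2) \<and> j > 0 \<and> 3 dvd j}"

definition Jid :: "(hidx \<Rightarrow> 'a::field) set" where
  "Jid = \<Inter> {I. is_ideal I \<and> Jgens \<subseteq> I}"

definition fin_codim :: "(hidx \<Rightarrow> 'a::field) set \<Rightarrow> (hidx \<Rightarrow> 'a) set \<Rightarrow> bool" where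
  "fin_codim I W \<longleftrightarrow> (\<exists>B. finite B \<and> B \<subseteq> W \<and>
      (\<forall>w\<in>W. \<exists>c. w - (\<Sum>b\<in>B. smul (c b) b) \<in> I))"

end

theory Submission
  imports Defs
begin


definition supp :: "(hidx \<Rightarrow> 'a::field) \<Rightarrow> hidx set" where "supp f = {v. f v \<noteq> 0}"
definition dl :: "hidx \<Rightarrow> hidx \<Rightarrow> 'a::field" where "dl w v = (if v = w then 1 else 0)"

lemma Hvec_finite: "f \<in> Hvec \<Longrightarrow> finite (supp f)"
  by (simp add: Hvec_def supp_def)
lemma Hvec_valid: "f \<in> Hvec \<Longrightarrow> f v \<noteq> 0 \<Longrightarrow> valid_idx v"
  by (simp add: Hvec_def)
lemma Hvec_S0: "f \<in> Hvec \<Longrightarrow> f (S 0) = 0"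
  using Hvec_valid by fastforce

lemma sum_fun_apply: "(\<Sum>b\<in>B. F b) x = (\<Sum>b\<in>B. F b x)"
  by (induction B rule: infinite_finite_induct) auto

lemma sum_dl: "finite (supp f) \<Longrightarrow> (\<Sum>v\<in>supp f. f v * dl w v) = f w"
proof -
  assume fin: "finite (supp f)"
  have "(\<Sum>v\<in>supp f. f v * dl w v) = (\<Sum>v\<in>supp f. if v = w then f v else 0)"
    by (rule sum.cong) (auto simp: dl_def)
  also have "\<dots> = (if w \<in> supp f then f w else 0)" using fin by (simp add: sum.delta')
  also have "\<dots> = f w" by (auto simp: supp_def)
  finally show ?thesis .
qed

lemma sl_add: "(\<Sum>v\<in>X. f v * (g v + h v)) = (\<Sum>v\<in>X. f v * g v) + (\<Sum>v\<in>X. f v * (h v::'a::field))"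
  by (simp add: distrib_left sum.distrib)
lemma sl_diff: "(\<Sum>v\<in>X. f v * (g v - h v)) = (\<Sum>v\<in>X. f v * g v) - (\<Sum>v\<in>X. f v * (h v::'a::field))"
  by (simp add: right_diff_distrib sum_subtractf)
lemma sl_cmul: "(\<Sum>v\<in>X. f v * (c * g v)) = c * (\<Sum>v\<in>X. f v * (g v::'a::field))"
  by (simp add: sum_distrib_left mult.left_commute)

lemma hmult_ind: "hmult (ind y) f x = (\<Sum>v\<in>supp f. f v * bprod y v x)"
proof -
  have "{u. ind y u \<noteq> (0::'a)} = {y}" by (auto simp: ind_def)
  then show ?thesis by (simp add: hmult_def supp_def ind_def)
qed

lemma F1:
  assumes "f \<in> Hvec"
  shows "hmult (ind (S n)) f (A m) = -(3/4) * f (A m) + 3/8 * f (A (m + int n)) + 3/8 * f (A (m - int n))"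
proof -
  have b: "\<And>v. bprod (S n) v (A m) = -(3/4) * dl (A m) v + 3/8 * dl (A (m + int n)) v + 3/8 * (dl (A (m - int n)) v::'a)"
    subgoal for v by (cases v) (auto simp: dl_def bprod_def prodAS_def prodSS_def prodSP_def smul_def va_def vs_def vz_def vp_def ind_def)
    done
  show ?thesis unfolding hmult_ind b
    by (simp only: sl_add sl_cmul sum_dl Hvec_finite assms)
qed


lemma Hvec_zero: "0 \<in> Hvec" by (simp add: Hvec_def)
lemma Hvec_add: "f \<in> Hvec \<Longrightarrow> g \<in> Hvec \<Longrightarrow> f + g \<in> Hvec"
proof -
  assume f: "f \<in> Hvec" and g: "g \<in> Hvec"
  have "{x. (f + g) x \<noteq> 0} \<subseteq> {x. f x \<noteq> 0} \<union> {x. g x \<noteq> 0}" by auto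
  moreover have "finite ({x. f x \<noteq> 0} \<union> {x. g x \<noteq> 0})" using f g by (simp add: Hvec_def)
  ultimately have "finite {x. (f + g) x \<noteq> 0}" by (rule finite_subset)
  moreover have "\<forall>x. (f+g) x \<noteq> 0 \<longrightarrow> valid_idx x"
    using f g by (auto simp: Hvec_def) (metis add.right_neutral)
  ultimately show ?thesis by (simp add: Hvec_def)
qed
lemma Hvec_smul: "f \<in> Hvec \<Longrightarrow> smul c f \<in> Hvec"
proof -
  assume f: "f \<in> Hvec"
  have "{x. smul c f x \<noteq> 0} \<subseteq> {x. f x \<noteq> 0}" by (auto simp: smul_def)
  then have "finite {x. smul c f x \<noteq> 0}" using f by (simp add: Hvec_def finite_subset)
  then show ?thesis using f by (auto simp: Hvec_def smul_def)
qed
lemma minus_smul: "f - g = f + smul (-1) (g::hidx \<Rightarrow> 'a::field)"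
  by (rule ext) (simp add: smul_def)
lemma uminus_smul: "- g = smul (-1) (g::hidx \<Rightarrow> 'a::field)"
  by (rule ext) (simp add: smul_def)
lemma Hvec_diff: "f \<in> Hvec \<Longrightarrow> g \<in> Hvec \<Longrightarrow> f - g \<in> Hvec"
  by (simp add: minus_smul Hvec_add Hvec_smul)
lemma Hvec_uminus: "g \<in> Hvec \<Longrightarrow> - g \<in> Hvec"
  by (simp add: uminus_smul Hvec_smul)
lemma Hvec_sum: "(\<And>x. x \<in> F \<Longrightarrow> g x \<in> Hvec) \<Longrightarrow> (\<Sum>x\<in>F. g x) \<in> Hvec"
  by (induction F rule: infinite_finite_induct) (auto simp: Hvec_zero Hvec_add)
lemma ind_Hvec: "valid_idx x \<Longrightarrow> ind x \<in> Hvec"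
proof -
  assume v: "valid_idx x"
  have "{y. ind x y \<noteq> (0::'a)} = {x}" by (auto simp: ind_def)
  then show "ind x \<in> Hvec" using v by (auto simp: Hvec_def ind_def split: if_splits)
qed

lemma va_Hvec: "va i \<in> Hvec" by (simp add: va_def ind_Hvec)
lemma vs_Hvec: "vs j \<in> Hvec" by (simp add: vs_def ind_Hvec Hvec_zero)
lemma vp_Hvec: "vp r k \<in> Hvec"
  by (simp add: vp_def ind_Hvec Hvec_zero Hvec_diff Hvec_uminus)
lemma vz_Hvec: "vz r k \<in> Hvec" by (simp add: vz_def vp_Hvec Hvec_diff)

lemma bprod_Hvec: "bprod u v \<in> Hvec"
  by (cases u; cases v) (simp_all add: bprod_def prodAA_def prodAS_def prodAP_def prodSS_def prodSP_def prodPP_def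
      Hvec_add Hvec_diff Hvec_smul va_Hvec vs_Hvec vp_Hvec vz_Hvec)

lemma hmult_expand: "hmult g f = (\<Sum>u\<in>supp g. \<Sum>v\<in>supp f. smul (g u * f v) (bprod u v))"
  by (rule ext) (simp add: hmult_def supp_def sum_fun_apply smul_def)

lemma hmult_Hvec: "hmult g f \<in> Hvec"
  unfolding hmult_expand by (intro Hvec_sum Hvec_smul bprod_Hvec)

definition Pspace :: "(hidx \<Rightarrow> 'a::field) set" where
  "Pspace = {f \<in> Hvec. (\<forall>i. f (A i) = 0) \<and> (\<forall>j. f (S j) = 0)}"

lemma bprod_P_A: "bprod u (P t h) (A i) = 0"
  by (cases u) (simp_all add: bprod_def prodAP_def prodSP_def prodPP_def smul_def vz_def vp_def ind_def)
lemma bprod_P_S: "bprod u (P t h) (S i) = 0"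
  by (cases u) (simp_all add: bprod_def prodAP_def prodSP_def prodPP_def smul_def vz_def vp_def ind_def)

lemma Pspace_supp: "f \<in> Pspace \<Longrightarrow> f v \<noteq> 0 \<Longrightarrow> \<exists>t h. v = P t h"
  by (cases v) (auto simp: Pspace_def)

lemma hmult_Pspace: "f \<in> Pspace \<Longrightarrow> hmult g f \<in> Pspace"
proof -
  assume f: "f \<in> Pspace"
  have "\<And>x. (\<forall>u v. f v \<noteq> 0 \<longrightarrow> bprod u v x = (0::'a)) \<Longrightarrow> hmult g f x = 0"
    unfolding hmult_def by (intro sum.neutral ballI) auto
  moreover have "\<forall>u v. f v \<noteq> 0 \<longrightarrow> bprod u v (A i) = (0::'a)" for i
    using Pspace_supp[OF f] bprod_P_A by fastforce
  moreover have "\<forall>u v. f v \<noteq> 0 \<longrightarrow> bprod u v (S i) = (0::'a)" for i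
    using Pspace_supp[OF f] bprod_P_S by fastforce
  ultimately show ?thesis by (simp add: Pspace_def hmult_Hvec)
qed

lemma Pspace_ideal: "is_ideal (Pspace :: (hidx \<Rightarrow> 'a::field) set)"
proof -
  have "f + g \<in> Pspace" if "f \<in> Pspace" "g \<in> Pspace" for f g :: "hidx \<Rightarrow> 'a"
    using that by (simp add: Pspace_def Hvec_add)
  moreover have "smul c f \<in> Pspace" if "f \<in> Pspace" for c and f :: "hidx \<Rightarrow> 'a"
    using that by (simp add: Pspace_def Hvec_smul) (simp add: smul_def)
  moreover have "(0::hidx \<Rightarrow> 'a) \<in> Pspace" by (simp add: Pspace_def Hvec_zero)
  moreover have "Pspace \<subseteq> (Hvec :: (hidx \<Rightarrow> 'a) set)" by (auto simp: Pspace_def)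
  ultimately show ?thesis unfolding is_ideal_def using hmult_Pspace by blast
qed

lemma repr: "finite (supp f) \<Longrightarrow> f = (\<Sum>v\<in>supp f. smul (f v) (ind v))"
proof (rule ext)
  fix x assume fin: "finite (supp f)"
  have "(\<Sum>v\<in>supp f. smul (f v) (ind v)) x = (\<Sum>v\<in>supp f. if v = x then f v else 0)"
    by (simp add: sum_fun_apply smul_def ind_def) (rule sum.cong, auto)
  also have "\<dots> = f x" using fin by (simp add: sum.delta supp_def)
  finally show "f x = (\<Sum>v\<in>supp f. smul (f v) (ind v)) x" by simp
qed

definition subsp :: "(hidx \<Rightarrow> 'a::field) set \<Rightarrow> bool" where
  "subsp Q \<longleftrightarrow> 0 \<in> Q \<and> (\<forall>f\<in>Q. \<forall>g\<in>Q. f + g \<in> Q) \<and> (\<forall>c. \<forall>f\<in>Q. smul c f \<in> Q)"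

lemma ideal_subsp: "is_ideal I \<Longrightarrow> subsp I" by (simp add: is_ideal_def subsp_def)

lemma subsp_sum: "subsp Q \<Longrightarrow> (\<And>x. x \<in> F \<Longrightarrow> g x \<in> Q) \<Longrightarrow> (\<Sum>x\<in>F. g x) \<in> Q"
  by (induction F rule: infinite_finite_induct) (auto simp: subsp_def)

lemma subsp_span: "subsp Q \<Longrightarrow> finite (supp f) \<Longrightarrow> (\<And>v. f v \<noteq> 0 \<Longrightarrow> ind v \<in> Q) \<Longrightarrow> f \<in> Q"
  apply (subst repr, assumption)
  apply (rule subsp_sum, assumption)
  apply (auto simp: subsp_def supp_def)
  done

lemma Jid_eq: "(Jid :: (hidx \<Rightarrow> 'a::field) set) = Pspace"
proof
  have "Jgens \<subseteq> (Pspace :: (hidx \<Rightarrow> 'a) set)"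
  proof
    fix x :: "hidx \<Rightarrow> 'a" assume "x \<in> Jgens"
    then obtain r j where rj: "r = 1 \<or> r = 2" "j > 0" "3 dvd j" "x = vp r j" by (auto simp: Jgens_def)
    then have x: "x = ind (P r j)" by (auto simp: vp_def)
    have "valid_idx (P r j)" using rj by auto
    then show "x \<in> Pspace" unfolding x Pspace_def by (simp add: ind_Hvec) (simp add: ind_def)
  qed
  then show "(Jid :: (hidx \<Rightarrow> 'a) set) \<subseteq> Pspace"
    unfolding Jid_def using Pspace_ideal by blast
next
  show "(Pspace :: (hidx \<Rightarrow> 'a) set) \<subseteq> Jid"
  proof
    fix f :: "hidx \<Rightarrow> 'a" assume f: "f \<in> Pspace"
    show "f \<in> Jid" unfolding Jid_def
    proof
      fix I assume "I \<in> {I. is_ideal I \<and> (Jgens :: (hidx \<Rightarrow> 'a) set) \<subseteq> I}"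
      then have I: "is_ideal I" "Jgens \<subseteq> I" by auto
      show "f \<in> I"
      proof (rule subsp_span[OF ideal_subsp[OF I(1)]])
        show "finite (supp f)" using f by (simp add: Pspace_def Hvec_finite)
        fix v assume fv: "f v \<noteq> 0"
        then obtain t h where v: "v = P t h" using Pspace_supp f by blast
        have "valid_idx v" using fv f by (auto simp: Pspace_def Hvec_def)
        then have "ind v \<in> (Jgens :: (hidx \<Rightarrow> 'a) set)" using v
          by (auto simp: Jgens_def vp_def intro!: exI[of _ t] exI[of _ h])
        then show "ind v \<in> I" using I by blast
      qed
    qed
  qed
qed


definition ifo :: "bool \<Rightarrow> 'a::field" where "ifo b = (if b then 1 else 0)"
lemma ifo_T[simp]: "ifo True = 1" and ifo_F[simp]: "ifo False = 0" by (auto simp: ifo_def)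

lemma dl_ifo: "dl w v = ifo (w = v)" by (simp add: dl_def ifo_def)
lemma ind_ifo: "ind x y = ifo (y = x)" by (simp add: ind_def ifo_def)
lemma smul_apply: "smul c f x = c * f x" by (simp add: smul_def)

lemma va_A: "va i (A m) = ifo (m = i)" by (simp add: va_def ind_ifo)
lemma va_S[simp]: "va i (S j) = 0" and va_P[simp]: "va i (P r k) = 0" by (simp_all add: va_def ind_def)
lemma vs_S: "j \<ge> 1 \<Longrightarrow> vs x (S j) = ifo (j = x)" by (auto simp: vs_def ind_ifo)
lemma vs_A[simp]: "vs x (A i) = 0" and vs_P[simp]: "vs x (P r k) = 0" by (simp_all add: vs_def ind_def)
lemma vp_A[simp]: "vp r k (A i) = 0" and vp_S[simp]: "vp r k (S j) = 0" by (simp_all add: vp_def ind_def)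
lemma vz_A[simp]: "vz r k (A i) = 0" and vz_S[simp]: "vz r k (S j) = 0" by (simp_all add: vz_def)

definition isA :: "hidx \<Rightarrow> 'a::field" where "isA v = (case v of A _ \<Rightarrow> 1 | _ \<Rightarrow> 0)"
definition isS :: "hidx \<Rightarrow> 'a::field" where "isS v = (case v of S _ \<Rightarrow> 1 | _ \<Rightarrow> 0)"
lemma isA_simps[simp]: "isA (A i) = 1" "isA (S j) = 0" "isA (P r k) = 0" by (simp_all add: isA_def)
lemma isS_simps[simp]: "isS (A i) = 0" "isS (S j) = 1" "isS (P r k) = 0" by (simp_all add: isS_def)

lemma ifo_ndist: "(l::nat) \<ge> 1 \<Longrightarrow> j \<ge> 1 \<Longrightarrow> ifo (j = ndist n l) = ifo (n + j = l) + (ifo (n - j = l) :: 'a::field)"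
  by (auto simp: ifo_def ndist_def)
lemma ifo_sumnat: "(l::nat) \<ge> 1 \<Longrightarrow> ifo (j = n + l) = (ifo (j - n = l) :: 'a::field)"
  by (auto simp: ifo_def)

lemma nz2: assumes "(2::'a::field) \<noteq> 0"
  shows "(4::'a) \<noteq> 0" "(8::'a) \<noteq> 0" "(16::'a) \<noteq> 0" "(32::'a) \<noteq> 0" "(64::'a) \<noteq> 0"
proof -
  have a: "(4::'a) = 2 * 2" "(8::'a) = 2*2*2" "(16::'a) = 2*2*2*2" "(32::'a) = 2*2*2*2*2" "(64::'a) = 2*2*2*2*2*2" by simp_all
  show "(4::'a) \<noteq> 0" "(8::'a) \<noteq> 0" "(16::'a) \<noteq> 0" "(32::'a) \<noteq> 0" "(64::'a) \<noteq> 0"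
    using assms by (simp_all only: a mult_eq_0_iff de_Morgan_disj not_False_eq_True simp_thms)
qed


lemma vp_P: "0 < K \<Longrightarrow> 3 dvd K \<Longrightarrow> vp r x (P r' K) = ifo (x = K) *
   (if r mod 3 = 1 then ifo (r' = 1) else if r mod 3 = 2 then ifo (r' = 2) else - ifo (r' = 1) - ifo (r' = 2))"
  by (auto simp: vp_def ind_ifo ifo_def)
lemma vz_P: "vz r x (P r' K) = vp (r+1) x (P r' K) - vp (r - 1) x (P r' K)"
  by (simp add: vz_def)

definition asum :: "(hidx \<Rightarrow> 'a::field) \<Rightarrow> 'a" where "asum f = (\<Sum>v\<in>supp f. f v * isA v)"
definition bsum :: "(hidx \<Rightarrow> 'a::field) \<Rightarrow> 'a" where "bsum f = (\<Sum>v\<in>supp f. f v * isS v)"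

lemma hic: "f \<in> Hvec \<Longrightarrow> (\<And>v. f v \<noteq> 0 \<Longrightarrow> valid_idx v \<Longrightarrow> bprod y v x = F v) \<Longrightarrow>
   hmult (ind y) f x = (\<Sum>v\<in>supp f. f v * F v)"
  unfolding hmult_ind by (rule sum.cong) (auto simp: supp_def Hvec_def)

lemma F2:
  fixes f :: "hidx \<Rightarrow> 'a::field"
  assumes two: "(2::'a) \<noteq> 0" and f: "f \<in> Hvec" and j: "j \<ge> 1"
  shows "hmult (ind (S n)) f (S j) = 3/2 * ifo (j = n) * asum f + 3/4 * ifo (j = n) * bsum f
     + 3/4 * f (S j) - 3/8 * (f (S (n+j)) + f (S (n-j)) + f (S (j-n)))"
proof -
  have "hmult (ind (S n)) f (S j) = (\<Sum>v\<in>supp f. f v * ((3/2 * ifo (j = n)) * isA v + (3/4 * ifo (j = n)) * isS v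
     + 3/4 * dl (S j) v - 3/8 * (dl (S (n+j)) v + dl (S (n-j)) v + dl (S (j-n)) v)))"
    apply (rule hic[OF f])
    subgoal for v
      using j two by (cases v; simp_all add: bprod_def prodAS_def prodSS_def prodSP_def smul_apply va_A vs_S dl_ifo ifo_ndist ifo_sumnat; auto simp: field_simps nz2 ifo_def)
    done
  then show ?thesis
    by (simp only: sl_add sl_diff sl_cmul sum_dl Hvec_finite f asum_def bsum_def)
qed

lemma F3:
  fixes f :: "hidx \<Rightarrow> 'a::field"
  assumes two: "(2::'a) \<noteq> 0" and f: "f \<in> Hvec"
  shows "hmult (ind (A i)) f (A m) = 1/2 * ifo (m = i) * asum f - 3/4 * ifo (m = i) * bsum f
     + 1/2 * f (A m) + 3/8 * (f (S (nat (i - m))) + f (S (nat (m - i))))"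
proof -
  have "hmult (ind (A i)) f (A m) = (\<Sum>v\<in>supp f. f v * ((1/2 * ifo (m = i)) * isA v - (3/4 * ifo (m = i)) * isS v
     + 1/2 * dl (A m) v + 3/8 * (dl (S (nat (i - m))) v + dl (S (nat (m - i))) v)))"
    apply (rule hic[OF f])
    subgoal for v
      using two by (cases v; simp_all add: bprod_def prodAA_def prodAS_def prodAP_def smul_apply va_A dl_ifo; auto simp: field_simps nz2 ifo_def)
    done
  then show ?thesis
    by (simp only: sl_add sl_diff sl_cmul sum_dl Hvec_finite f asum_def bsum_def)
qed

lemma F4:
  fixes f :: "hidx \<Rightarrow> 'a::field"
  assumes two: "(2::'a) \<noteq> 0" and f: "f \<in> Hvec" and j: "j \<ge> 1"
  shows "hmult (ind (A i)) f (S j) = f (A (i - int j)) + f (A (i + int j)) + 3/2 * f (S j)"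
proof -
  have "hmult (ind (A i)) f (S j) = (\<Sum>v\<in>supp f. f v * (dl (A (i - int j)) v + dl (A (i + int j)) v + 3/2 * dl (S j) v))"
    apply (rule hic[OF f])
    subgoal for v
      using j two by (cases v; simp_all add: bprod_def prodAA_def prodAS_def prodAP_def smul_apply vs_S dl_ifo; auto simp: field_simps nz2 ifo_def)
    done
  then show ?thesis
    by (simp only: sl_add sl_diff sl_cmul sum_dl Hvec_finite f)
qed

lemma F5a:
  fixes f :: "hidx \<Rightarrow> 'a::field"
  assumes two: "(2::'a) \<noteq> 0" and f: "f \<in> Pspace" and k: "0 < k" "3 dvd k"
  shows "hmult (ind (A 0)) f (P 1 k) = 3/2 * f (P 1 k) - f (P 2 k)"
proof -
  have fH: "f \<in> Hvec" using f by (simp add: Pspace_def)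
  have "hmult (ind (A 0)) f (P 1 k) = (\<Sum>v\<in>supp f. f v * (3/2 * dl (P 1 k) v - dl (P 2 k) v))"
    apply (rule hic[OF fH])
    subgoal for v
      using Pspace_supp[OF f, of v] k two
      by (auto simp: bprod_def prodAP_def smul_apply vp_P dl_ifo ifo_def field_simps nz2 split: if_splits)
    done
  then show ?thesis
    by (simp only: sl_add sl_diff sl_cmul sum_dl Hvec_finite fH)
qed

lemma F5b:
  fixes f :: "hidx \<Rightarrow> 'a::field"
  assumes two: "(2::'a) \<noteq> 0" and f: "f \<in> Pspace" and k: "0 < k" "3 dvd k"
  shows "hmult (ind (A 0)) f (P 2 k) = 3/2 * f (P 2 k) - f (P 1 k)"
proof -
  have fH: "f \<in> Hvec" using f by (simp add: Pspace_def)
  have "hmult (ind (A 0)) f (P 2 k) = (\<Sum>v\<in>supp f. f v * (3/2 * dl (P 2 k) v - dl (P 1 k) v))"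
    apply (rule hic[OF fH])
    subgoal for v
      using Pspace_supp[OF f, of v] k two
      by (auto simp: bprod_def prodAP_def smul_apply vp_P dl_ifo ifo_def field_simps nz2 split: if_splits)
    done
  then show ?thesis
    by (simp only: sl_add sl_diff sl_cmul sum_dl Hvec_finite fH)
qed

lemma F5c:
  fixes f :: "hidx \<Rightarrow> 'a::field"
  assumes two: "(2::'a) \<noteq> 0" and f: "f \<in> Pspace" and k: "0 < k" "3 dvd k"
  shows "hmult (ind (A 1)) f (P 1 k) = 1/2 * f (P 1 k) + f (P 2 k)"
proof -
  have fH: "f \<in> Hvec" using f by (simp add: Pspace_def)
  have "hmult (ind (A 1)) f (P 1 k) = (\<Sum>v\<in>supp f. f v * (1/2 * dl (P 1 k) v + dl (P 2 k) v))"
    apply (rule hic[OF fH])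
    subgoal for v
      using Pspace_supp[OF f, of v] k two
      by (auto simp: bprod_def prodAP_def smul_apply vp_P dl_ifo ifo_def field_simps nz2 split: if_splits)
    done
  then show ?thesis
    by (simp only: sl_add sl_diff sl_cmul sum_dl Hvec_finite fH)
qed

lemma F5d:
  fixes f :: "hidx \<Rightarrow> 'a::field"
  assumes two: "(2::'a) \<noteq> 0" and f: "f \<in> Pspace" and k: "0 < k" "3 dvd k"
  shows "hmult (ind (A 1)) f (P 2 k) = 5/2 * f (P 2 k)"
proof -
  have fH: "f \<in> Hvec" using f by (simp add: Pspace_def)
  have "hmult (ind (A 1)) f (P 2 k) = (\<Sum>v\<in>supp f. f v * (5/2 * dl (P 2 k) v))"
    apply (rule hic[OF fH])
    subgoal for v
      using Pspace_supp[OF f, of v] k two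
      by (auto simp: bprod_def prodAP_def smul_apply vp_P dl_ifo ifo_def field_simps nz2 split: if_splits)
    done
  then show ?thesis
    by (simp only: sl_add sl_diff sl_cmul sum_dl Hvec_finite fH)
qed

lemma F6:
  fixes f :: "hidx \<Rightarrow> 'a::field"
  assumes two: "(2::'a) \<noteq> 0" and f: "f \<in> Pspace" and f2: "\<forall>h. f (P 2 h) = 0"
    and fD: "\<forall>h. f (P 1 h) \<noteq> 0 \<longrightarrow> h \<le> D" and j: "j \<ge> 1" and k: "k \<ge> j + D" "0 < k" "3 dvd k"
  shows "hmult (ind (S j)) f (P r k) = -(3/8) * ifo (r = 1) * f (P 1 (k - j))"
proof -
  have fH: "f \<in> Hvec" using f by (simp add: Pspace_def)
  have "hmult (ind (S j)) f (P r k) = (\<Sum>v\<in>supp f. f v * ((-(3/8) * ifo (r = 1)) * dl (P 1 (k - j)) v))"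
    apply (rule hic[OF fH])
    subgoal for v
    proof -
      assume fv: "f v \<noteq> 0" and vv: "valid_idx v"
      obtain t h where v: "v = P t h" using Pspace_supp[OF f fv] by blast
      have t: "t = 1" using fv f2 v vv by auto
      have h: "h \<le> D" "0 < h" "3 dvd h" using fv fD v t vv by auto
      have c1: "j \<noteq> k" "h \<noteq> k" "ndist j h \<noteq> k" using h j k by (auto simp: ndist_def)
      have c2: "(j + h = k) = (k - j = h)" using k by auto
      show ?thesis unfolding v t
        using c1 c2 k two
        by (simp add: bprod_def prodSP_def smul_apply vp_P dl_ifo)
    qed
    done
  then show ?thesis
    by (simp only: sl_add sl_diff sl_cmul sum_dl Hvec_finite fH)
qed

lemma F7a:
  fixes H :: "hidx \<Rightarrow> 'a::field"
  assumes two: "(2::'a) \<noteq> 0" and HH: "H \<in> Hvec" and HA: "\<forall>i. H (A i) = 0"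
    and HS: "\<forall>l. H (S l) \<noteq> 0 \<longrightarrow> l \<le> n" and HP: "\<forall>t h. H (P t h) \<noteq> 0 \<longrightarrow> h < k"
    and n: "n \<ge> 1" "3 dvd n" and k: "k > n" "3 dvd k"
  shows "hmult (ind (P 1 k)) H (P 1 (k + n)) = -(3/8) * H (S n) - 1/8 * (H (P 1 n) + H (P 2 n))"
proof -
  have K: "0 < k + n" "3 dvd (k + n)" using n k by auto
  have "hmult (ind (P 1 k)) H (P 1 (k + n)) = (\<Sum>v\<in>supp H. H v * (-(3/8) * dl (S n) v - 1/8 * (dl (P 1 n) v + dl (P 2 n) v)))"
    apply (rule hic[OF HH])
    subgoal for v
    proof -
      assume fv: "H v \<noteq> 0" and vv: "valid_idx v"
      show ?thesis
      proof (cases v)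
        case (A i) then show ?thesis using fv HA by simp
      next
        case (S l)
        have l: "l \<le> n" "l \<ge> 1" using fv HS vv S by auto
        have c1: "l \<noteq> k + n" "k \<noteq> k + n" "ndist l k \<noteq> k + n" using l n k by (auto simp: ndist_def)
        have c2: "(l + k = k + n) = (l = n)" by auto
        show ?thesis unfolding S using c1 c2 K two
          by (auto simp: bprod_def prodSP_def smul_apply vp_P dl_ifo ifo_def field_simps nz2)
      next
        case (P t h)
        have h: "h < k" "t = 1 \<or> t = 2" using fv HP vv P by auto
        have c1: "h \<noteq> k + n" "k \<noteq> k + n" "ndist k h \<noteq> k + n" using h n k by (auto simp: ndist_def)
        have c2: "(k + h = k + n) = (h = n)" by auto
        show ?thesis unfolding P using c1 c2 K two h(2)
          by (auto simp: bprod_def prodPP_def smul_apply vz_P vp_P dl_ifo ifo_def field_simps nz2)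
      qed
    qed
    done
  then show ?thesis
    by (simp only: sl_add sl_diff sl_cmul sum_dl Hvec_finite HH)
qed

lemma F7b:
  fixes H :: "hidx \<Rightarrow> 'a::field"
  assumes two: "(2::'a) \<noteq> 0" and HH: "H \<in> Hvec" and HA: "\<forall>i. H (A i) = 0"
    and HS: "\<forall>l. H (S l) \<noteq> 0 \<longrightarrow> l \<le> n" and HP: "\<forall>t h. H (P t h) \<noteq> 0 \<longrightarrow> h < k"
    and n: "n \<ge> 1" "3 dvd n" and k: "k > n" "3 dvd k"
  shows "hmult (ind (P 1 k)) H (P 2 (k + n)) = -(1/8) * (2 * H (P 1 n) - H (P 2 n))"
proof -
  have K: "0 < k + n" "3 dvd (k + n)" using n k by auto
  have "hmult (ind (P 1 k)) H (P 2 (k + n)) = (\<Sum>v\<in>supp H. H v * (-(1/8) * (2 * dl (P 1 n) v - dl (P 2 n) v)))"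
    apply (rule hic[OF HH])
    subgoal for v
    proof -
      assume fv: "H v \<noteq> 0" and vv: "valid_idx v"
      show ?thesis
      proof (cases v)
        case (A i) then show ?thesis using fv HA by simp
      next
        case (S l)
        have l: "l \<le> n" "l \<ge> 1" using fv HS vv S by auto
        have c1: "l \<noteq> k + n" "k \<noteq> k + n" "ndist l k \<noteq> k + n" using l n k by (auto simp: ndist_def)
        have c2: "(l + k = k + n) = (l = n)" by auto
        show ?thesis unfolding S using c1 c2 K two
          by (auto simp: bprod_def prodSP_def smul_apply vp_P dl_ifo ifo_def field_simps nz2)
      next
        case (P t h)
        have h: "h < k" "t = 1 \<or> t = 2" using fv HP vv P by auto
        have c1: "h \<noteq> k + n" "k \<noteq> k + n" "ndist k h \<noteq> k + n" using h n k by (auto simp: ndist_def)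
        have c2: "(k + h = k + n) = (h = n)" by auto
        show ?thesis unfolding P using c1 c2 K two h(2)
          by (auto simp: bprod_def prodPP_def smul_apply vz_P vp_P dl_ifo ifo_def field_simps nz2)
      qed
    qed
    done
  then show ?thesis
    by (simp only: sl_add sl_diff sl_cmul sum_dl Hvec_finite HH)
qed

lemma F7c:
  fixes H :: "hidx \<Rightarrow> 'a::field"
  assumes two: "(2::'a) \<noteq> 0" and HH: "H \<in> Hvec" and HA: "\<forall>i. H (A i) = 0"
    and HS: "\<forall>l. H (S l) \<noteq> 0 \<longrightarrow> l \<le> n" and HP: "\<forall>t h. H (P t h) \<noteq> 0 \<longrightarrow> h < k"
    and n: "n \<ge> 1" "3 dvd n" and k: "k > n" "3 dvd k"
  shows "hmult (ind (P 2 k)) H (P 2 (k + n)) = -(3/8) * H (S n) + 1/8 * (H (P 1 n) + H (P 2 n))"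
proof -
  have K: "0 < k + n" "3 dvd (k + n)" using n k by auto
  have "hmult (ind (P 2 k)) H (P 2 (k + n)) = (\<Sum>v\<in>supp H. H v * (-(3/8) * dl (S n) v + 1/8 * (dl (P 1 n) v + dl (P 2 n) v)))"
    apply (rule hic[OF HH])
    subgoal for v
    proof -
      assume fv: "H v \<noteq> 0" and vv: "valid_idx v"
      show ?thesis
      proof (cases v)
        case (A i) then show ?thesis using fv HA by simp
      next
        case (S l)
        have l: "l \<le> n" "l \<ge> 1" using fv HS vv S by auto
        have c1: "l \<noteq> k + n" "k \<noteq> k + n" "ndist l k \<noteq> k + n" using l n k by (auto simp: ndist_def)
        have c2: "(l + k = k + n) = (l = n)" by auto
        show ?thesis unfolding S using c1 c2 K two
          by (auto simp: bprod_def prodSP_def smul_apply vp_P dl_ifo ifo_def field_simps nz2)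
      next
        case (P t h)
        have h: "h < k" "t = 1 \<or> t = 2" using fv HP vv P by auto
        have c1: "h \<noteq> k + n" "k \<noteq> k + n" "ndist k h \<noteq> k + n" using h n k by (auto simp: ndist_def)
        have c2: "(k + h = k + n) = (h = n)" by auto
        show ?thesis unfolding P using c1 c2 K two h(2)
          by (auto simp: bprod_def prodPP_def smul_apply vz_P vp_P dl_ifo ifo_def field_simps nz2)
      qed
    qed
    done
  then show ?thesis
    by (simp only: sl_add sl_diff sl_cmul sum_dl Hvec_finite HH)
qed


lemma bprod_P_left_A: "bprod (P t h) v (A i) = 0"
  by (cases v) (simp_all add: bprod_def prodAP_def prodSP_def prodPP_def smul_def)
lemma bprod_P_left_S: "bprod (P t h) v (S i) = 0"
  by (cases v) (simp_all add: bprod_def prodAP_def prodSP_def prodPP_def smul_def)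

lemma hmult_Pspace_left: "g \<in> Pspace \<Longrightarrow> hmult g f \<in> Pspace"
proof -
  assume g: "g \<in> Pspace"
  have "\<And>x. (\<forall>u v. g u \<noteq> 0 \<longrightarrow> bprod u v x = (0::'a)) \<Longrightarrow> hmult g f x = 0"
    unfolding hmult_def by (intro sum.neutral ballI) auto
  moreover have "\<forall>u v. g u \<noteq> 0 \<longrightarrow> bprod u v (A i) = (0::'a)" for i
    using Pspace_supp[OF g] bprod_P_left_A by fastforce
  moreover have "\<forall>u v. g u \<noteq> 0 \<longrightarrow> bprod u v (S i) = (0::'a)" for i
    using Pspace_supp[OF g] bprod_P_left_S by fastforce
  ultimately show ?thesis by (simp add: Pspace_def hmult_Hvec)
qed

lemma fin_pre: "f \<in> Hvec \<Longrightarrow> inj C \<Longrightarrow> finite {x. f (C x) \<noteq> 0}"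
proof -
  assume f: "f \<in> Hvec" and C: "inj C"
  have "{x. f (C x) \<noteq> 0} = C -` supp f" by (auto simp: supp_def)
  then show ?thesis using finite_vimageI[OF Hvec_finite[OF f] C] by simp
qed
lemma injA: "inj A" and injS: "inj S" and injP: "inj (P t)" by (auto intro: injI)

lemma ideal_mult: "is_ideal I \<Longrightarrow> f \<in> I \<Longrightarrow> valid_idx y \<Longrightarrow> hmult (ind y) f \<in> I"
  by (simp add: is_ideal_def ind_Hvec)
lemma ideal_Hvec: "is_ideal I \<Longrightarrow> f \<in> I \<Longrightarrow> f \<in> Hvec"
  by (auto simp: is_ideal_def)
lemma ideal_add: "is_ideal I \<Longrightarrow> f \<in> I \<Longrightarrow> g \<in> I \<Longrightarrow> f + g \<in> I"
  by (simp add: is_ideal_def)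
lemma ideal_smul: "is_ideal I \<Longrightarrow> f \<in> I \<Longrightarrow> smul c f \<in> I"
  by (simp add: is_ideal_def)

lemma triangle:
  fixes Q :: "(hidx \<Rightarrow> 'a::field) set" and mu :: "hidx \<Rightarrow> nat"
  assumes Q: "subsp Q"
    and base: "\<And>x. Pr x \<Longrightarrow> mu x \<le> d \<Longrightarrow> ind x \<in> Q"
    and step: "\<And>x. Pr x \<Longrightarrow> mu x > d \<Longrightarrow> \<exists>g\<in>Q. g \<in> Hvec \<and> g x \<noteq> 0 \<and>
                   (\<forall>y. g y \<noteq> 0 \<longrightarrow> y \<noteq> x \<longrightarrow> ind y \<in> Q \<or> (Pr y \<and> mu y < mu x))"
  shows "Pr x \<Longrightarrow> ind x \<in> Q"
proof (induction "mu x" arbitrary: x rule: less_induct)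
  case less
  show ?case
  proof (cases "mu x \<le> d")
    case True then show ?thesis using base less.prems by blast
  next
    case False
    then obtain g where g: "g \<in> Q" "g \<in> Hvec" "g x \<noteq> 0"
      and hy: "\<forall>y. g y \<noteq> 0 \<longrightarrow> y \<noteq> x \<longrightarrow> ind y \<in> Q \<or> (Pr y \<and> mu y < mu x)"
      using step less.prems by force
    define R where "R = (\<Sum>y\<in>supp g - {x}. smul (g y) (ind y))"
    have RQ: "R \<in> Q" unfolding R_def
    proof (rule subsp_sum[OF Q])
      fix y assume y: "y \<in> supp g - {x}"
      then have "ind y \<in> Q" using hy less.hyps by (auto simp: supp_def)
      then show "smul (g y) (ind y) \<in> Q" using Q by (simp add: subsp_def)
    qed
    have fin: "finite (supp g)" using g by (simp add: Hvec_finite)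
    have xs: "x \<in> supp g" using g by (simp add: supp_def)
    have gdec: "g = smul (g x) (ind x) + R"
      unfolding R_def using repr[OF fin] sum.remove[OF fin xs, of "\<lambda>v. smul (g v) (ind v)"] by simp
    have "ind x = smul (1 / g x) (g + smul (-1) R)"
    proof (rule ext)
      fix v
      have "g v = g x * ind x v + R v" using gdec by (metis plus_fun_apply smul_apply)
      then show "ind x v = smul (1 / g x) (g + smul (-1) R) v" using g(3) by (simp add: smul_apply)
    qed
    moreover have "smul (1 / g x) (g + smul (-1) R) \<in> Q" using Q g RQ by (simp add: subsp_def)
    ultimately show ?thesis by simp
  qed
qed



definition Qset :: "(hidx \<Rightarrow> 'a::field) set \<Rightarrow> (hidx \<Rightarrow> 'a) set \<Rightarrow> (hidx \<Rightarrow> 'a) set" where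
  "Qset I B = {w. \<exists>c. w - (\<Sum>b\<in>B. smul (c b) b) \<in> I}"

lemma QsetI: "w - (\<Sum>b\<in>B. smul (c b) b) \<in> I \<Longrightarrow> w \<in> Qset I B" by (auto simp: Qset_def)
lemma QsetE: "w \<in> Qset I B \<Longrightarrow> \<exists>c. w - (\<Sum>b\<in>B. smul (c b) b) \<in> I" by (auto simp: Qset_def)

lemma Qset_subsp: assumes I: "subsp I" shows "subsp (Qset I B)"
proof -
  have z: "(0::hidx \<Rightarrow> 'a) - (\<Sum>b\<in>B. smul ((\<lambda>_. 0) b) b) = 0"
  proof (rule ext)
    fix x show "((0::hidx \<Rightarrow> 'a) - (\<Sum>b\<in>B. smul ((\<lambda>_. 0) b) b)) x = 0 x"
      by (simp add: sum_fun_apply smul_apply)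
  qed
  have a: "(w1 + w2) - (\<Sum>b\<in>B. smul (c1 b + c2 b) b) = (w1 - (\<Sum>b\<in>B. smul (c1 b) b)) + (w2 - (\<Sum>b\<in>B. smul (c2 b) b))"
    for w1 w2 :: "hidx \<Rightarrow> 'a" and c1 c2
  proof (rule ext)
    fix x
    have "(\<Sum>b\<in>B. smul (c1 b + c2 b) b x) = (\<Sum>b\<in>B. smul (c1 b) b x) + (\<Sum>b\<in>B. smul (c2 b) b x)"
      by (simp add: smul_apply distrib_right sum.distrib)
    then show "((w1 + w2) - (\<Sum>b\<in>B. smul (c1 b + c2 b) b)) x = ((w1 - (\<Sum>b\<in>B. smul (c1 b) b)) + (w2 - (\<Sum>b\<in>B. smul (c2 b) b))) x"
      by (simp add: sum_fun_apply)
  qed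
  have s: "smul a w - (\<Sum>b\<in>B. smul (a * c b) b) = smul a (w - (\<Sum>b\<in>B. smul (c b) b))"
    for a and w :: "hidx \<Rightarrow> 'a" and c
  proof (rule ext)
    fix x
    have "(\<Sum>b\<in>B. smul (a * c b) b x) = a * (\<Sum>b\<in>B. smul (c b) b x)"
      by (simp add: smul_apply sum_distrib_left mult.assoc)
    then show "(smul a w - (\<Sum>b\<in>B. smul (a * c b) b)) x = smul a (w - (\<Sum>b\<in>B. smul (c b) b)) x"
      by (simp add: sum_fun_apply smul_apply right_diff_distrib)
  qed
  have "0 \<in> Qset I B" using z I by (intro QsetI[where c="\<lambda>_. 0"]) (simp add: subsp_def)
  moreover have "f + g \<in> Qset I B" if fg: "f \<in> Qset I B" "g \<in> Qset I B" for f g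
  proof -
    obtain c1 c2 where "f - (\<Sum>b\<in>B. smul (c1 b) b) \<in> I" "g - (\<Sum>b\<in>B. smul (c2 b) b) \<in> I"
      using QsetE[OF fg(1)] QsetE[OF fg(2)] by blast
    then have "(f + g) - (\<Sum>b\<in>B. smul (c1 b + c2 b) b) \<in> I" unfolding a using I by (simp add: subsp_def)
    then show ?thesis by (rule QsetI)
  qed
  moreover have "smul a f \<in> Qset I B" if ff: "f \<in> Qset I B" for a f
  proof -
    obtain c where "f - (\<Sum>b\<in>B. smul (c b) b) \<in> I" using QsetE[OF ff] by blast
    then have "smul a f - (\<Sum>b\<in>B. smul (a * c b) b) \<in> I" unfolding s using I by (simp add: subsp_def)
    then show ?thesis by (rule QsetI)
  qed
  ultimately show ?thesis unfolding subsp_def by blast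
qed

lemma Qset_I: assumes "subsp I" shows "I \<subseteq> Qset I B"
proof
  fix w assume w: "w \<in> I"
  have "w - (\<Sum>b\<in>B. smul ((\<lambda>_. 0) b) b) = w"
  proof (rule ext)
    fix x show "(w - (\<Sum>b\<in>B. smul ((\<lambda>_. 0) b) b)) x = w x" by (simp add: sum_fun_apply smul_apply)
  qed
  then show "w \<in> Qset I B" using w by (intro QsetI[where c="\<lambda>_. 0"]) simp
qed

lemma Qset_B: assumes I: "subsp I" and B: "finite B" "b \<in> B" shows "b \<in> Qset I B"
proof -
  have e: "b - (\<Sum>b'\<in>B. smul ((\<lambda>b'. if b' = b then 1 else 0) b') b') = 0"
  proof (rule ext)
    fix x
    have "(\<Sum>b'\<in>B. smul (if b' = b then 1 else 0) b' x) = (\<Sum>b'\<in>B. if b' = b then b' x else 0)"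
      by (rule sum.cong) (auto simp: smul_apply)
    also have "\<dots> = b x" using B by (simp add: sum.delta')
    finally show "(b - (\<Sum>b'\<in>B. smul ((\<lambda>b'. if b' = b then 1 else 0) b') b')) x = 0 x"
      by (simp add: sum_fun_apply)
  qed
  have "(0::hidx \<Rightarrow> 'a) \<in> I" using I by (simp add: subsp_def)
  then show ?thesis using e by (intro QsetI[where c="\<lambda>b'. if b' = b then 1 else 0"]) simp
qed



lemma notfin:
  fixes I :: "(hidx \<Rightarrow> 'a::field) set"
  assumes I: "is_ideal I" and IP: "I \<subseteq> Pspace"
  shows "\<not> fin_codim I Hvec"
proof
  assume "fin_codim I Hvec"
  then obtain B where B: "finite B" "B \<subseteq> Hvec" and hB: "\<forall>w\<in>Hvec. \<exists>c. w - (\<Sum>b\<in>B. smul (c b) b) \<in> I"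
    unfolding fin_codim_def by blast
  have "finite {i. b (A i) \<noteq> 0}" if "b \<in> B" for b
    using that B(2) fin_pre[OF _ injA] by blast
  then have "finite (\<Union>b\<in>B. {i. b (A i) \<noteq> 0})" using B(1) by blast
  then obtain i where i: "i \<notin> (\<Union>b\<in>B. {i. b (A i) \<noteq> 0})" using ex_new_if_finite[OF infinite_UNIV_int] by blast
  have "ind (A i) \<in> (Hvec :: (hidx \<Rightarrow> 'a) set)" by (simp add: ind_Hvec)
  then obtain c where c: "ind (A i) - (\<Sum>b\<in>B. smul (c b) b) \<in> I" using hB by blast
  then have "(ind (A i) - (\<Sum>b\<in>B. smul (c b) b)) (A i) = 0" using IP by (auto simp: Pspace_def)
  moreover have "(\<Sum>b\<in>B. smul (c b) b (A i)) = 0" using i by (intro sum.neutral) (auto simp: smul_apply)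
  moreover have "(ind (A i) - (\<Sum>b\<in>B. smul (c b) b)) (A i) = ind (A i) (A i) - (\<Sum>b\<in>B. smul (c b) b (A i))"
    by (simp only: minus_apply sum_fun_apply)
  moreover have "ind (A i) (A i) = (1::'a)" by (simp add: ind_def)
  ultimately show False by simp
qed


lemma nzc:
  assumes two: "(2::'a::field) \<noteq> 0" and three: "(3::'a) \<noteq> 0"
  shows "(3/8::'a) \<noteq> 0" "(9/32::'a) \<noteq> 0" "(3/2::'a) \<noteq> 0" "(3/4::'a) \<noteq> 0" "(9::'a) \<noteq> 0" "(6::'a) \<noteq> 0"
proof -
  have a: "(9::'a) = 3 * 3" "(6::'a) = 2 * 3" by simp_all
  have n9: "(9::'a) \<noteq> 0" "(6::'a) \<noteq> 0" using two three by (simp_all only: a mult_eq_0_iff de_Morgan_disj not_False_eq_True simp_thms)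
  show "(3/8::'a) \<noteq> 0" "(9/32::'a) \<noteq> 0" "(3/2::'a) \<noteq> 0" "(3/4::'a) \<noteq> 0" "(9::'a) \<noteq> 0" "(6::'a) \<noteq> 0"
    using two three n9 nz2[OF two] by simp_all
qed

lemma nz2b: assumes "(2::'a::field) \<noteq> 0"
  shows "(128::'a) \<noteq> 0" "(256::'a) \<noteq> 0" "(512::'a) \<noteq> 0" "(1024::'a) \<noteq> 0" "(2048::'a) \<noteq> 0" "(4096::'a) \<noteq> 0"
proof -
  have a: "(128::'a) = 64 * 2" "(256::'a) = 64*4" "(512::'a) = 64*8" "(1024::'a) = 64*16" "(2048::'a) = 64*32" "(4096::'a) = 64*64" by simp_all
  show "(128::'a) \<noteq> 0" "(256::'a) \<noteq> 0" "(512::'a) \<noteq> 0" "(1024::'a) \<noteq> 0" "(2048::'a) \<noteq> 0" "(4096::'a) \<noteq> 0"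
    using assms nz2[OF assms] by (simp_all only: a mult_eq_0_iff de_Morgan_disj not_False_eq_True simp_thms)
qed

lemma alg1:
  fixes u :: "'a::field"
  assumes "G = (-(2*u) * g1m + u * g1p + u * g1n) + (4*u) * g1m + (-u) * g2m"
    "g1m = -(2*u) * a + u * b1 + u * b0" "g1p = -(2*u) * b1 + u * c1 + u * a"
    "g1n = -(2*u) * b0 + u * a + u * c0" "g2m = -(2*u) * a + u * c1 + u * c0"
  shows "G = 0"
  using assms by algebra

lemma alg2: fixes u :: "'a::field" shows "x = -u * (-u * y) + c * 0 + -u * (-u * y) \<Longrightarrow> x = 2 * (u * u * y)"
  by algebra

lemma g3:
  fixes f :: "hidx \<Rightarrow> 'a::field"
  assumes two: "(2::'a) \<noteq> 0" and three: "(3::'a) \<noteq> 0" and I: "is_ideal I" and f: "f \<in> I" and fj: "f (S j0) \<noteq> 0"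
  shows "\<exists>G\<in>I. (\<forall>i. G (A i) = 0) \<and> (\<exists>j. G (S j) \<noteq> 0)"
proof -
  have fH: "f \<in> Hvec" using I f by (rule ideal_Hvec)
  define d where "d = Max {j. f (S j) \<noteq> 0}"
  have fin: "finite {j. f (S j) \<noteq> 0}" using fH fin_pre injS by blast
  have fd: "f (S d) \<noteq> 0" unfolding d_def using Max_in[OF fin] fj by auto
  have dge: "\<forall>l. f (S l) \<noteq> 0 \<longrightarrow> l \<le> d" unfolding d_def using Max_ge[OF fin] by auto
  have d1: "d \<ge> 1"
  proof (rule ccontr)
    assume "\<not> d \<ge> 1" then have "d = 0" by simp
    then show False using fd Hvec_S0[OF fH] by simp
  qed
  have z: "\<And>l. l > d \<Longrightarrow> f (S l) = 0" using dge by force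
  have f0: "f (S 0) = 0" using Hvec_S0[OF fH] .
  define g1 where "g1 = hmult (ind (S 1)) f"
  define g2 where "g2 = hmult (ind (S 2)) f"
  define G where "G = hmult (ind (S 1)) g1 + smul (3/2) g1 + smul (-(3/8)) g2"
  have g1I: "g1 \<in> I" "g2 \<in> I" using ideal_mult[OF I f] by (auto simp: g1_def g2_def)
  have g1H: "g1 \<in> Hvec" "g2 \<in> Hvec" using g1I ideal_Hvec[OF I] by auto
  have GI: "G \<in> I" unfolding G_def
    by (intro ideal_add[OF I] ideal_smul[OF I] ideal_mult[OF I] g1I) auto
  have GA: "G (A m) = 0" for m
  proof -
    have e: "m + 1 + 1 = m + 2" "m + 1 - 1 = m" "m - 1 + 1 = m" "m - 1 - 1 = m - 2" by auto
    have uu: "(3/4::'a) = 2 * (3/8)" "(3/2::'a) = 4 * (3/8)" using two nz2[OF two] by (simp_all add: field_simps)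
    have a1: "g1 (A x) = -(2 * (3/8)) * f (A x) + 3/8 * f (A (x + 1)) + 3/8 * f (A (x - 1))" for x
      unfolding g1_def using F1[OF fH, of 1 x] by (simp only: uu of_nat_1)
    have a2: "g2 (A m) = -(2 * (3/8)) * f (A m) + 3/8 * f (A (m + 2)) + 3/8 * f (A (m - 2))"
      unfolding g2_def using F1[OF fH, of 2 m] by (simp only: uu of_nat_numeral)
    have G1: "G (A m) = (-(2 * (3/8)) * g1 (A m) + 3/8 * g1 (A (m + 1)) + 3/8 * g1 (A (m - 1))) + (4 * (3/8)) * g1 (A m) + (-(3/8)) * g2 (A m)"
      unfolding G_def using F1[OF g1H(1), of 1 m] by (simp only: uu of_nat_1 plus_fun_apply smul_apply)
    show ?thesis by (rule alg1[OF G1 a1[of m] a1[of "m+1", unfolded e] a1[of "m-1", unfolded e] a2])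
  qed
  have g1S: "g1 (S x) = 3/4 * f (S x) - 3/8 * (f (S (1 + x)) + f (S (x - 1)))" if "x \<ge> 2" for x
    unfolding g1_def using F2[OF two fH, of x 1] that f0 by simp
  have s1: "g1 (S (d+1)) = -(3/8) * f (S d)" using g1S[of "d+1"] z[of "d+1"] z[of "1 + (d+1)"] d1 by simp
  have s2: "g1 (S (d+2)) = 0" using g1S[of "d+2"] z[of "d+2"] z[of "1 + (d+2)"] z[of "d+1"] d1 by simp
  have s3: "g1 (S (d+3)) = 0" using g1S[of "d+3"] z[of "d+3"] z[of "1 + (d+3)"] z[of "d+2"] d1 by simp
  have s4: "g2 (S (d+2)) = -(3/8) * f (S d)"
    unfolding g2_def using F2[OF two fH, of "d+2" 2] z[of "d+2"] z[of "2 + (d+2)"] f0 d1 by simp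
  have s5: "hmult (ind (S 1)) g1 (S (d+2)) = -(3/8) * g1 (S (d+1))"
    using F2[OF two g1H(1), of "d+2" 1] s2 s3 Hvec_S0[OF g1H(1)] d1 by (simp add: add.commute numeral_eq_Suc)
  have "G (S (d+2)) = -(3/8) * g1 (S (d+1)) + 3/2 * g1 (S (d+2)) + -(3/8) * g2 (S (d+2))"
    unfolding G_def using s5 by (simp only: plus_fun_apply smul_apply)
  also have "\<dots> = -(3/8) * (-(3/8) * f (S d)) + 3/2 * 0 + -(3/8) * (-(3/8) * f (S d))"
    by (simp only: s1 s2 s4)
  finally have "G (S (d+2)) = 2 * ((3/8) * (3/8) * f (S d))" by (rule alg2)
  then have "G (S (d+2)) \<noteq> 0" using fd nzc(1)[OF two three] two by (metis mult_eq_0_iff)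
  then show ?thesis using GI GA by blast
qed


lemma alg3: fixes u :: "'a::field" shows "v1 = -u * b - w * s \<Longrightarrow> v2 = -u * b + w * s \<Longrightarrow> v1 + v2 = -(2 * (u * b))"
  by algebra

lemma getG0:
  fixes f :: "hidx \<Rightarrow> 'a::field"
  assumes two: "(2::'a) \<noteq> 0" and three: "(3::'a) \<noteq> 0" and I: "is_ideal I" and f: "f \<in> I" and nf: "f \<notin> Pspace"
  shows "\<exists>G\<in>I. (\<forall>i. G (A i) = 0) \<and> (\<exists>j. G (S j) \<noteq> 0)"
proof (cases "\<exists>j. f (S j) \<noteq> 0")
  case True then show ?thesis using g3[OF two three I f] by blast
next
  case False
  hence fS: "\<forall>j. f (S j) = 0" by auto
  have fH: "f \<in> Hvec" using I f by (rule ideal_Hvec)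
  have bs: "bsum f = 0" unfolding bsum_def
  proof (rule sum.neutral, rule ballI)
    fix v show "f v * isS v = 0" using fS by (cases v) auto
  qed
  show ?thesis
  proof (cases "asum f = 0")
    case False
    define f' where "f' = hmult (ind (S 1)) f"
    have f'I: "f' \<in> I" unfolding f'_def by (rule ideal_mult[OF I f]) simp
    have "f' (S 1) = 3/2 * asum f" unfolding f'_def using F2[OF two fH, of 1 1] fS bs by simp
    then have "f' (S 1) \<noteq> 0" using False nzc(3)[OF two three] by (metis mult_eq_0_iff)
    then show ?thesis using g3[OF two three I f'I] by blast
  next
    case True
    obtain i0 where i0: "f (A i0) \<noteq> 0" using nf fH fS by (auto simp: Pspace_def)
    define M where "M = Max {i. f (A i) \<noteq> 0}"
    have fin: "finite {i. f (A i) \<noteq> 0}" using fH fin_pre injA by blast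
    have fM: "f (A M) \<noteq> 0" unfolding M_def using Max_in[OF fin] i0 by auto
    have fM2: "f (A (M + 2)) = 0"
    proof (rule ccontr)
      assume "f (A (M + 2)) \<noteq> 0"
      then have "M + 2 \<in> {i. f (A i) \<noteq> 0}" by simp
      then have "M + 2 \<le> M" unfolding M_def by (rule Max_ge[OF fin])
      then show False by simp
    qed
    define G where "G = hmult (ind (A (M+1))) f + smul (-(1/2)) f"
    have GI: "G \<in> I" unfolding G_def by (intro ideal_add[OF I] ideal_smul[OF I] ideal_mult[OF I] f) auto
    have GA: "G (A m) = 0" for m
      unfolding G_def using F3[OF two fH, of "M+1" m] True bs fS by (simp add: smul_apply)
    have h4: "hmult (ind (A (M+1))) f (S 1) = f (A M) + f (A (M + 2)) + 3/2 * f (S 1)"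
      using F4[OF two fH, of 1 "M+1"] by (simp add: add.commute)
    have "G (S 1) = f (A M)"
      unfolding G_def using h4 fS fM2 by (simp add: smul_apply)
    then have "G (S 1) \<noteq> 0" using fM by simp
    then show ?thesis using GI GA by (intro bexI[of _ G] conjI allI exI[of _ 1]) simp_all
  qed
qed

lemma getJ:
  fixes G0 :: "hidx \<Rightarrow> 'a::field"
  assumes two: "(2::'a) \<noteq> 0" and three: "(3::'a) \<noteq> 0" and I: "is_ideal I" and G0: "G0 \<in> I"
    and GA: "\<forall>i. G0 (A i) = 0" and Gj: "G0 (S j0) \<noteq> 0"
  shows "\<exists>f\<in>I. f \<in> Pspace \<and> f \<noteq> 0"
proof -
  have GH: "G0 \<in> Hvec" using I G0 by (rule ideal_Hvec)
  define d where "d = Max {j. G0 (S j) \<noteq> 0}"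
  have fin: "finite {j. G0 (S j) \<noteq> 0}" using GH fin_pre injS by blast
  have fd: "G0 (S d) \<noteq> 0" unfolding d_def using Max_in[OF fin] Gj by auto
  have dge: "\<forall>l. G0 (S l) \<noteq> 0 \<longrightarrow> l \<le> d" unfolding d_def using Max_ge[OF fin] by auto
  have d1: "d \<ge> 1"
  proof (rule ccontr)
    assume "\<not> d \<ge> 1" then have "d = 0" by simp
    then show False using fd Hvec_S0[OF GH] by simp
  qed
  have z: "\<And>l. l > d \<Longrightarrow> G0 (S l) = 0" using dge by force
  have g0: "G0 (S 0) = 0" using Hvec_S0[OF GH] .
  define k0 where "k0 = 2 * d"
  have k0: "1 \<le> k0" "3 dvd (k0 + d)" using d1 by (auto simp: k0_def)
  define n where "n = k0 + d"
  have n: "n \<ge> 1" "3 dvd n" "n > d" "n \<noteq> k0" "n - k0 = d" "k0 < n" using k0 d1 by (auto simp: n_def)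
  define H where "H = hmult (ind (S k0)) G0"
  have HI: "H \<in> I" unfolding H_def by (rule ideal_mult[OF I G0]) (use k0 in simp)
  have HH: "H \<in> Hvec" using I HI by (rule ideal_Hvec)
  have HA: "\<forall>i. H (A i) = 0" unfolding H_def using F1[OF GH] GA by simp
  have HSn: "H (S n) = -(3/8) * G0 (S d)"
    unfolding H_def using F2[OF two GH, of n k0] n z[of n] z[of "k0 + n"] g0 by simp
  have HSl: "\<forall>l. H (S l) \<noteq> 0 \<longrightarrow> l \<le> n"
  proof (intro allI impI, rule ccontr)
    fix l assume l: "H (S l) \<noteq> 0" "\<not> l \<le> n"
    have "l \<noteq> k0" "k0 - l = 0" "l - k0 > d" using l n by auto
    then have "H (S l) = 0"
      unfolding H_def using F2[OF two GH, of l k0] l n z[of l] z[of "k0 + l"] z[of "l - k0"] g0 by simp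
    then show False using l by simp
  qed
  define Mx where "Mx = Max ({h. H (P 1 h) \<noteq> 0} \<union> {h. H (P 2 h) \<noteq> 0} \<union> {0})"
  have finM: "finite ({h. H (P 1 h) \<noteq> 0} \<union> {h. H (P 2 h) \<noteq> 0} \<union> {0})"
    using fin_pre[OF HH injP, of 1] fin_pre[OF HH injP, of 2] by simp
  define k where "k = 3 * (n + Mx + 1)"
  have k: "k > n" "3 dvd k" "k > 0" by (auto simp: k_def)
  have HP: "\<forall>t h. H (P t h) \<noteq> 0 \<longrightarrow> h < k"
  proof (intro allI impI)
    fix t h assume th: "H (P t h) \<noteq> 0"
    then have "valid_idx (P t h)" using HH Hvec_valid by blast
    then have "t = 1 \<or> t = 2" by simp
    then have "h \<in> {h. H (P 1 h) \<noteq> 0} \<union> {h. H (P 2 h) \<noteq> 0} \<union> {0}" using th by auto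
    then have "h \<le> Mx" unfolding Mx_def using Max_ge[OF finM] by blast
    then show "h < k" by (simp add: k_def)
  qed
  have v1: "hmult (ind (P 1 k)) H (P 1 (k + n)) = -(3/8) * H (S n) - 1/8 * (H (P 1 n) + H (P 2 n))"
    by (rule F7a[OF two HH HA HSl HP n(1,2) k(1,2)])
  have v2: "hmult (ind (P 2 k)) H (P 2 (k + n)) = -(3/8) * H (S n) + 1/8 * (H (P 1 n) + H (P 2 n))"
    by (rule F7c[OF two HH HA HSl HP n(1,2) k(1,2)])
  have sum12: "hmult (ind (P 1 k)) H (P 1 (k + n)) + hmult (ind (P 2 k)) H (P 2 (k + n)) = -(2 * (3/8 * H (S n)))"
    by (rule alg3[OF v1 v2])
  have HSn0: "H (S n) \<noteq> 0" using HSn fd nzc[OF two three] by simp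
  have "2 * (3/8 * H (S n)) \<noteq> (0::'a)" using HSn0 two nzc(1)[OF two three] by (metis mult_eq_0_iff)
  then have "hmult (ind (P 1 k)) H (P 1 (k + n)) \<noteq> 0 \<or> hmult (ind (P 2 k)) H (P 2 (k + n)) \<noteq> 0"
    using sum12 by auto
  then obtain r where r: "r = 1 \<or> r = 2" "hmult (ind (P r k)) H (P r (k + n)) \<noteq> 0"
    by blast
  have vr: "valid_idx (P r k)" using r k by auto
  have "hmult (ind (P r k)) H \<in> I" by (rule ideal_mult[OF I HI vr])
  moreover have "hmult (ind (P r k)) H \<in> Pspace"
    by (rule hmult_Pspace_left) (use vr in \<open>simp add: Pspace_def ind_Hvec, simp add: ind_def\<close>)
  moreover have "hmult (ind (P r k)) H \<noteq> 0"
  proof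
    assume "hmult (ind (P r k)) H = 0"
    then have "hmult (ind (P r k)) H (P r (k + n)) = 0" by simp
    then show False using r(2) by blast
  qed
  ultimately show ?thesis by blast
qed


fun muP :: "hidx \<Rightarrow> nat" where "muP (P t h) = h" | "muP _ = 0"
fun muAS :: "hidx \<Rightarrow> nat" where "muAS (A i) = nat \<bar>i\<bar>" | "muAS (S j) = j" | "muAS (P _ _) = 0"
fun isAS :: "hidx \<Rightarrow> bool" where "isAS (P _ _) = False" | "isAS _ = True"

lemma Pspace_val: "f \<in> Pspace \<Longrightarrow> \<not> valid_idx (P t k) \<Longrightarrow> f (P t k) = 0"
  using Hvec_valid by (fastforce simp: Pspace_def)

lemma P_tri:
  fixes K :: "(hidx \<Rightarrow> 'a::field) set"
  assumes two: "(2::'a) \<noteq> 0" and three: "(3::'a) \<noteq> 0" and KP: "K \<subseteq> Pspace" and Ks: "subsp K"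
    and Km: "\<And>f y. f \<in> K \<Longrightarrow> valid_idx y \<Longrightarrow> hmult (ind y) f \<in> K"
    and f0: "f0 \<in> K" "f0 \<noteq> 0"
  shows "\<exists>D. \<forall>Q. subsp Q \<longrightarrow> K \<subseteq> Q \<longrightarrow> (\<forall>t h. valid_idx (P t h) \<and> h \<le> D \<longrightarrow> ind (P t h) \<in> Q)
           \<longrightarrow> (\<forall>t h. valid_idx (P t h) \<longrightarrow> ind (P t h) \<in> Q)"
proof -
  define s1 where "s1 f = smul (5/2) f + smul (-1) (hmult (ind (A 1)) f)" for f :: "hidx \<Rightarrow> 'a"
  define s0 where "s0 f = smul (3/2) f + smul (-1) (hmult (ind (A 0)) f)" for f :: "hidx \<Rightarrow> 'a"
  have s1K: "s1 f \<in> K" if "f \<in> K" for f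
    unfolding s1_def using Ks Km[OF that, of "A 1"] that by (simp add: subsp_def)
  have s0K: "s0 f \<in> K" if "f \<in> K" for f
    unfolding s0_def using Ks Km[OF that, of "A 0"] that by (simp add: subsp_def)
  have s1v: "s1 f (P 1 k) = 2 * f (P 1 k) - f (P 2 k)" "s1 f (P 2 k) = 0"
    if "f \<in> Pspace" "0 < k" "3 dvd k" for f k
    unfolding s1_def using F5c[OF two that] F5d[OF two that] two by (simp_all add: smul_apply field_simps)
  have s0v: "s0 f (P 1 k) = f (P 2 k)" "s0 f (P 2 k) = f (P 1 k)"
    if "f \<in> Pspace" "0 < k" "3 dvd k" for f k
    unfolding s0_def using F5a[OF two that] F5b[OF two that] two by (simp_all add: smul_apply field_simps)
  have f0P: "f0 \<in> Pspace" using f0 KP by blast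
  have "\<exists>v. f0 v \<noteq> 0"
  proof (rule ccontr)
    assume "\<not> (\<exists>v. f0 v \<noteq> 0)"
    then have "f0 = 0" by (simp add: fun_eq_iff)
    then show False using f0(2) by simp
  qed
  then obtain v where v: "f0 v \<noteq> 0" by blast
  obtain t0 k0 where tk: "v = P t0 k0" using Pspace_supp[OF f0P v] by blast
  have "valid_idx v" using v f0P Hvec_valid by (auto simp: Pspace_def)
  then have vk: "t0 = 1 \<or> t0 = 2" "0 < k0" "3 dvd k0" using tk by auto
  obtain h where hK: "h \<in> K" and h2: "\<forall>k. h (P 2 k) = 0" and h1: "\<exists>k. h (P 1 k) \<noteq> 0"
  proof (cases "\<exists>k. 0 < k \<and> 3 dvd k \<and> 2 * f0 (P 1 k) - f0 (P 2 k) \<noteq> 0")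
    case True
    then obtain k where k: "0 < k" "3 dvd k" "2 * f0 (P 1 k) - f0 (P 2 k) \<noteq> 0" by blast
    have "s1 f0 \<in> K" using s1K f0 by blast
    moreover have "\<forall>k. s1 f0 (P 2 k) = 0"
    proof
      fix k'
      show "s1 f0 (P 2 k') = 0"
      proof (cases "0 < k' \<and> 3 dvd k'")
        case True then show ?thesis using s1v(2)[OF f0P] by blast
      next
        case False then show ?thesis using Pspace_val[OF _ , of "s1 f0" 2 k'] s1K f0 KP by auto
      qed
    qed
    moreover have "s1 f0 (P 1 k) \<noteq> 0" using s1v(1)[OF f0P k(1,2)] k(3) by simp
    ultimately show ?thesis using that[of "s1 f0"] by blast
  next
    case False
    then have "\<not> (0 < k0 \<and> 3 dvd k0 \<and> 2 * f0 (P 1 k0) - f0 (P 2 k0) \<noteq> 0)" by blast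
    then have "2 * f0 (P 1 k0) - f0 (P 2 k0) = 0" using vk(2,3) by blast
    then have rel: "f0 (P 2 k0) = 2 * f0 (P 1 k0)" by (simp add: right_minus_eq)
    have x0: "f0 (P 1 k0) \<noteq> 0"
    proof
      assume z: "f0 (P 1 k0) = 0"
      then have "f0 (P 2 k0) = 0" using rel by simp
      then show False using v tk vk(1) z by auto
    qed
    define h where "h = s1 (s0 f0)"
    have s0P: "s0 f0 \<in> Pspace" using s0K f0 KP by blast
    have "h \<in> K" unfolding h_def using s1K s0K f0 by blast
    moreover have "\<forall>k. h (P 2 k) = 0"
    proof
      fix k'
      show "h (P 2 k') = 0"
      proof (cases "0 < k' \<and> 3 dvd k'")
        case True then show ?thesis unfolding h_def using s1v(2)[OF s0P] by blast
      next
        case False then show ?thesis using Pspace_val[OF _ , of h 2 k'] \<open>h \<in> K\<close> KP by auto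
      qed
    qed
    moreover have "h (P 1 k0) = 3 * f0 (P 1 k0)"
      unfolding h_def using s1v(1)[OF s0P vk(2,3)] s0v[OF f0P vk(2,3)] rel by simp
    then have "h (P 1 k0) \<noteq> 0" using x0 three by simp
    ultimately show ?thesis using that[of h] by blast
  qed
  have hP: "h \<in> Pspace" using hK KP by blast
  have hH: "h \<in> Hvec" using hP by (simp add: Pspace_def)
  define D where "D = Max {k. h (P 1 k) \<noteq> 0}"
  have fin: "finite {k. h (P 1 k) \<noteq> 0}" using fin_pre[OF hH injP] .
  have hD: "h (P 1 D) \<noteq> 0" unfolding D_def using Max_in[OF fin] h1 by auto
  have hDge: "\<forall>k. h (P 1 k) \<noteq> 0 \<longrightarrow> k \<le> D" unfolding D_def using Max_ge[OF fin] by auto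
  have "valid_idx (P 1 D)" using hD hH Hvec_valid by blast
  then have Dv: "0 < D" "3 dvd D" by auto
  show ?thesis
  proof (intro exI[of _ D] allI impI)
    fix Q t n assume Q: "subsp Q" and KQ: "K \<subseteq> Q"
      and base: "\<forall>t h. valid_idx (P t h) \<and> h \<le> D \<longrightarrow> ind (P t h) \<in> Q" and vx: "valid_idx (P t n)"
    let ?Pr = "\<lambda>x. \<exists>t h. x = P t h \<and> valid_idx x"
    have "ind (P t n) \<in> Q"
    proof (rule triangle[OF Q, of ?Pr muP D])
      fix x assume "?Pr x" "muP x \<le> D"
      then show "ind x \<in> Q" using base by auto
    next
      fix x assume Px: "?Pr x" and mx: "muP x > D"
      then obtain t n where x: "x = P t n" and vx: "valid_idx (P t n)" by blast
      have n: "n > D" "0 < n" "3 dvd n" "t = 1 \<or> t = 2" using mx x vx by auto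
      define j where "j = n - D"
      have j: "j \<ge> 1" "n - j = D" using n Dv by (auto simp: j_def)
      define g where "g = hmult (ind (S j)) h"
      have gK: "g \<in> K" unfolding g_def using Km[OF hK] j by simp
      have gP: "g \<in> Pspace" using gK KP by blast
      have gH: "g \<in> Hvec" using gP by (simp add: Pspace_def)
      have gv: "g (P r k) = -(3/8) * ifo (r = 1) * h (P 1 (k - j))" if "k \<ge> n" "0 < k" "3 dvd k" for r k
        unfolding g_def by (rule F6[OF two hP h2 hDge j(1)]) (use that j_def n in auto)
      have gz: "g (P r k) = 0" if "k > n" "0 < k" "3 dvd k" for r k
      proof -
        have "k - j > D" using that j_def n by auto
        then have "h (P 1 (k - j)) = 0" using hDge by force
        then show ?thesis using gv[of k r] that by simp
      qed
      have g1n: "g (P 1 n) \<noteq> 0" using gv[of n 1] n j hD nzc[OF two three] by simp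
      have g2n: "g (P 2 n) = 0" using gv[of n 2] n by simp
      show "\<exists>g\<in>Q. g \<in> Hvec \<and> g x \<noteq> 0 \<and> (\<forall>y. g y \<noteq> 0 \<longrightarrow> y \<noteq> x \<longrightarrow> ind y \<in> Q \<or> (?Pr y \<and> muP y < muP x))"
      proof (cases "t = 1")
        case True
        have "\<forall>y. g y \<noteq> 0 \<longrightarrow> y \<noteq> x \<longrightarrow> (?Pr y \<and> muP y < muP x)"
        proof (intro allI impI)
          fix y assume gy: "g y \<noteq> 0" and yx: "y \<noteq> x"
          obtain r k where y: "y = P r k" using Pspace_supp[OF gP gy] by blast
          have vy: "valid_idx y" using gy gH Hvec_valid by blast
          have "k < n"
          proof (rule ccontr)
            assume "\<not> k < n"
            then have "k = n \<or> k > n" by auto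
            then show False
            proof
              assume "k = n" then have "r = 2" using yx y x True vy by auto
              then show False using gy y g2n \<open>k = n\<close> by simp
            next
              assume "k > n" then show False using gz[of k r] gy y vy by auto
            qed
          qed
          then show "?Pr y \<and> muP y < muP x" using y vy x by auto
        qed
        moreover have "g x \<noteq> 0" using g1n x True by simp
        moreover have "g \<in> Q" using gK KQ by blast
        ultimately show ?thesis using gH by (intro bexI[of _ g]) simp_all
      next
        case False
        then have t2: "t = 2" using n by auto
        define g' where "g' = s0 g"
        have g'K: "g' \<in> K" unfolding g'_def using s0K gK by blast
        have g'P: "g' \<in> Pspace" using g'K KP by blast
        have g'H: "g' \<in> Hvec" using g'P by (simp add: Pspace_def)
        have g'v: "g' (P 1 k) = g (P 2 k)" "g' (P 2 k) = g (P 1 k)" if "0 < k" "3 dvd k" for k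
          unfolding g'_def using s0v[OF gP that] by auto
        have "\<forall>y. g' y \<noteq> 0 \<longrightarrow> y \<noteq> x \<longrightarrow> (?Pr y \<and> muP y < muP x)"
        proof (intro allI impI)
          fix y assume gy: "g' y \<noteq> 0" and yx: "y \<noteq> x"
          obtain r k where y: "y = P r k" using Pspace_supp[OF g'P gy] by blast
          have vy: "valid_idx y" using gy g'H Hvec_valid by blast
          have "k < n"
          proof (rule ccontr)
            assume "\<not> k < n"
            then have kn: "k = n \<or> k > n" by auto
            have "r = 1 \<or> r = 2" using vy y by auto
            then show False
            proof
              assume r1: "r = 1"
              have "g' y = g (P 2 k)" using g'v(1)[of k] vy y r1 by auto
              also have "\<dots> = 0" using kn g2n gz[of k 2] vy y by auto
              finally show False using gy by simp
            next
              assume r2: "r = 2"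
              then have "k > n" using kn yx y x t2 by auto
              have "g' y = g (P 1 k)" using g'v(2)[of k] vy y r2 by auto
              also have "\<dots> = 0" using gz[of k 1] \<open>k > n\<close> vy y by auto
              finally show False using gy by simp
            qed
          qed
          then show "?Pr y \<and> muP y < muP x" using y vy x by auto
        qed
        moreover have "g' x \<noteq> 0" using g'v(2)[of n] n g1n x t2 by simp
        moreover have "g' \<in> Q" using g'K KQ by blast
        ultimately show ?thesis using g'H by (intro bexI[of _ g']) simp_all
      qed
    qed (use vx in auto)
    then show "ind (P t n) \<in> Q" .
  qed
qed


lemma AS_tri:
  fixes G0 :: "hidx \<Rightarrow> 'a::field"
  assumes two: "(2::'a) \<noteq> 0" and three: "(3::'a) \<noteq> 0" and I: "is_ideal I" and G0: "G0 \<in> I"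
    and GA: "\<forall>i. G0 (A i) = 0" and Gd: "G0 (S d) \<noteq> 0" and dge: "\<forall>l. G0 (S l) \<noteq> 0 \<longrightarrow> l \<le> d"
    and Q: "subsp Q" and IQ: "I \<subseteq> Q" and QP: "\<forall>t h. valid_idx (P t h) \<longrightarrow> ind (P t h) \<in> Q"
    and base: "\<forall>x. valid_idx x \<and> isAS x \<and> muAS x \<le> d \<longrightarrow> ind x \<in> Q"
  shows "valid_idx x \<Longrightarrow> isAS x \<Longrightarrow> ind x \<in> Q"
proof -
  assume vx: "valid_idx x" and ax: "isAS x"
  have GH: "G0 \<in> Hvec" using I G0 by (rule ideal_Hvec)
  have g0: "G0 (S 0) = 0" using Hvec_S0[OF GH] .
  have d1: "d \<ge> 1"
  proof (rule ccontr)
    assume "\<not> d \<ge> 1" then have "d = 0" by simp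
    then show False using Gd g0 by simp
  qed
  have z: "G0 (S l) = 0" if "l > d" for l
  proof (rule ccontr)
    assume "G0 (S l) \<noteq> 0" then have "l \<le> d" using dge by blast
    then show False using that by simp
  qed
  have zl: "1 \<le> l \<and> l \<le> d" if "G0 (S l) \<noteq> 0" for l
  proof
    show "1 \<le> l" using that g0 by (cases l) auto
    show "l \<le> d" using that dge by blast
  qed
  have supp_cases: "y = z \<or> ind y \<in> Q \<or> (valid_idx y \<and> isAS y \<and> muAS y < muAS z)"
    if gQ: "g \<in> Hvec" and gy: "g y \<noteq> 0"
       and hA: "\<And>m. g (A m) \<noteq> 0 \<Longrightarrow> A m \<noteq> z \<Longrightarrow> muAS (A m) < muAS z"
       and hS: "\<And>j. g (S j) \<noteq> 0 \<Longrightarrow> S j \<noteq> z \<Longrightarrow> muAS (S j) < muAS z" for g y z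
  proof (cases y)
    case (A m) then show ?thesis using hA gy Hvec_valid[OF gQ gy] by auto
  next
    case (S j) then show ?thesis using hS gy Hvec_valid[OF gQ gy] by auto
  next
    case (P t h) then show ?thesis using QP Hvec_valid[OF gQ gy] by auto
  qed
  show "ind x \<in> Q"
  proof (rule triangle[OF Q, of "\<lambda>x. valid_idx x \<and> isAS x" muAS d])
    fix x assume "valid_idx x \<and> isAS x" "muAS x \<le> d" then show "ind x \<in> Q" using base by blast
  next
    fix x assume Px: "valid_idx x \<and> isAS x" and mx: "d < muAS x"
    show "\<exists>g\<in>Q. g \<in> Hvec \<and> g x \<noteq> 0 \<and> (\<forall>y. g y \<noteq> 0 \<longrightarrow> y \<noteq> x \<longrightarrow> ind y \<in> Q \<or> ((valid_idx y \<and> isAS y) \<and> muAS y < muAS x))"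
    proof (cases x)
      case (P t h) then show ?thesis using Px by simp
    next
      case (S j)
      have j: "j > d" using mx S by simp
      define g where "g = hmult (ind (S (j - d))) G0"
      have gI: "g \<in> I" unfolding g_def by (rule ideal_mult[OF I G0]) (use j in simp)
      have gH: "g \<in> Hvec" using I gI by (rule ideal_Hvec)
      have gA: "g (A m) = 0" for m unfolding g_def using F1[OF GH] GA by simp
      have gS: "g (S j') = 0" if "j' > j" for j'
      proof -
        have a: "j' \<noteq> j - d" "j - d + j' > d" "j - d - j' = 0" "j' - (j - d) > d" using that j by auto
        show ?thesis unfolding g_def using F2[OF two GH, of j' "j - d"] that j a z[of j'] z[of "j - d + j'"] z[of "j' - (j - d)"] g0
          by simp
      qed
      have gx: "g (S j) = -(3/8) * G0 (S d)"
      proof -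
        have a: "j \<noteq> j - d" "j - d + j > d" "j - d - j = 0" "j - (j - d) = d" using j d1 by auto
        show ?thesis unfolding g_def using F2[OF two GH, of j "j - d"] j a z[of j] z[of "j - d + j"] g0
          by simp
      qed
      have gx0: "g x \<noteq> 0" using gx S Gd nzc[OF two three] by simp
      have "\<forall>y. g y \<noteq> 0 \<longrightarrow> y \<noteq> x \<longrightarrow> ind y \<in> Q \<or> ((valid_idx y \<and> isAS y) \<and> muAS y < muAS x)"
      proof (intro allI impI)
        fix y assume gy: "g y \<noteq> 0" and yx: "y \<noteq> x"
        have "y = x \<or> ind y \<in> Q \<or> (valid_idx y \<and> isAS y \<and> muAS y < muAS x)"
        proof (rule supp_cases[OF gH gy])
          fix m assume "g (A m) \<noteq> 0" then show "muAS (A m) < muAS x" using gA by simp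
        next
          fix j' assume g': "g (S j') \<noteq> 0" and jx: "S j' \<noteq> x"
          have "\<not> j' > j" using gS g' by blast
          then show "muAS (S j') < muAS x" using jx S by auto
        qed
        then show "ind y \<in> Q \<or> ((valid_idx y \<and> isAS y) \<and> muAS y < muAS x)" using yx by blast
      qed
      moreover have "g \<in> Q" using gI IQ by blast
      ultimately show ?thesis using gH gx0 by (intro bexI[of _ g]) simp_all
    next
      case (A m)
      have m: "nat \<bar>m\<bar> > d" using mx A by simp
      define i where "i = (if m > 0 then m - int d else m + int d)"
      define g where "g = hmult (ind (A i)) G0 + smul (-(3/2)) G0"
      have gI: "g \<in> I" unfolding g_def by (intro ideal_add[OF I] ideal_smul[OF I] ideal_mult[OF I] G0) simp_all
      have gH: "g \<in> Hvec" using I gI by (rule ideal_Hvec)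
      have gAv: "g (A m') = 1/2 * ifo (m' = i) * asum G0 - 3/4 * ifo (m' = i) * bsum G0
          + 3/8 * (G0 (S (nat (i - m'))) + G0 (S (nat (m' - i))))" for m'
        unfolding g_def using F3[OF two GH, of i m'] GA by (simp add: smul_apply)
      have gSv: "g (S j) = 0" if "j \<ge> 1" for j
        unfolding g_def using F4[OF two GH that, of i] GA by (simp add: smul_apply)
      have im: "m \<noteq> i" using d1 by (auto simp: i_def)
      have gx: "g (A m) = 3/8 * G0 (S d)"
      proof (cases "m > 0")
        case True
        then have "nat (i - m) = 0" "nat (m - i) = d" by (auto simp: i_def)
        then show ?thesis using gAv[of m] im g0 by simp
      next
        case False
        then have "nat (i - m) = d" "nat (m - i) = 0" by (auto simp: i_def)
        then show ?thesis using gAv[of m] im g0 by simp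
      qed
      have "3/8 * G0 (S d) \<noteq> 0" using Gd nzc(1)[OF two three] by (metis mult_eq_0_iff)
      then have gx0: "g x \<noteq> 0" unfolding A gx .
      have "\<forall>y. g y \<noteq> 0 \<longrightarrow> y \<noteq> x \<longrightarrow> ind y \<in> Q \<or> ((valid_idx y \<and> isAS y) \<and> muAS y < muAS x)"
      proof (intro allI impI)
        fix y assume gy: "g y \<noteq> 0" and yx: "y \<noteq> x"
        have "y = x \<or> ind y \<in> Q \<or> (valid_idx y \<and> isAS y \<and> muAS y < muAS x)"
        proof (rule supp_cases[OF gH gy])
          fix m' assume g': "g (A m') \<noteq> 0" and mx': "A m' \<noteq> x"
          have mm: "m' \<noteq> m" using mx' A by simp
          have "m' = i \<or> G0 (S (nat (i - m'))) \<noteq> 0 \<or> G0 (S (nat (m' - i))) \<noteq> 0"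
          proof (rule ccontr)
            assume "\<not> ?thesis"
            then have "ifo (m' = i) = (0::'a)" "G0 (S (nat (i - m'))) = 0" "G0 (S (nat (m' - i))) = 0" by auto
            then show False using g' gAv[of m'] by simp
          qed
          then have "m' = i \<or> (1 \<le> nat (i - m') \<and> nat (i - m') \<le> d) \<or> (1 \<le> nat (m' - i) \<and> nat (m' - i) \<le> d)"
            using zl by blast
          then have "nat \<bar>m'\<bar> < nat \<bar>m\<bar>" using mm m d1 unfolding i_def by (cases "m > 0") (simp_all, arith+)
          then show "muAS (A m') < muAS x" using A by simp
        next
          fix j assume g': "g (S j) \<noteq> 0" and "S j \<noteq> x"
          have "valid_idx (S j)" using Hvec_valid[OF gH g'] .
          then have "g (S j) = 0" using gSv by simp
          then show "muAS (S j) < muAS x" using g' by simp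
        qed
        then show "ind y \<in> Q \<or> ((valid_idx y \<and> isAS y) \<and> muAS y < muAS x)" using yx by blast
      qed
      moreover have "g \<in> Q" using gI IQ by blast
      ultimately show ?thesis using gH gx0 by (intro bexI[of _ g]) simp_all
    qed
  qed (use vx ax in simp)
qed


lemma codim_lemma:
  fixes I :: "(hidx \<Rightarrow> 'a::field) set"
  assumes I: "is_ideal I" and F: "finite F" "\<forall>x\<in>F. valid_idx x"
    and WH: "W \<subseteq> Hvec" and W: "\<And>w v. w \<in> W \<Longrightarrow> w v \<noteq> 0 \<Longrightarrow> ind v \<in> Qset I (ind ` F)"
    and FW: "ind ` F \<subseteq> W"
  shows "fin_codim I W"
  unfolding fin_codim_def
proof (intro exI[of _ "ind ` F"] conjI ballI)
  show "finite (ind ` F)" using F by simp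
  show "ind ` F \<subseteq> W" by (rule FW)
  fix w assume w: "w \<in> W"
  have Qs: "subsp (Qset I (ind ` F))" using Qset_subsp ideal_subsp[OF I] by blast
  have "w \<in> Qset I (ind ` F)"
    by (rule subsp_span[OF Qs]) (use W w WH Hvec_finite in auto)
  then show "\<exists>c. w - (\<Sum>b\<in>ind ` F. smul (c b) b) \<in> I" by (rule QsetE)
qed

lemma finFP: "finite {x. \<exists>t h. x = P t h \<and> valid_idx x \<and> h \<le> D}"
proof (rule finite_subset)
  show "{x. \<exists>t h. x = P t h \<and> valid_idx x \<and> h \<le> D} \<subseteq> (\<lambda>(t, h). P t h) ` ({1, 2} \<times> {..D})" by auto
qed simp

lemma finFAS: "finite {x. valid_idx x \<and> isAS x \<and> muAS x \<le> d}"
proof (rule finite_subset)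
  show "{x. valid_idx x \<and> isAS x \<and> muAS x \<le> d} \<subseteq> A ` {- int d..int d} \<union> S ` {..d}"
  proof
    fix x assume x: "x \<in> {x. valid_idx x \<and> isAS x \<and> muAS x \<le> d}"
    show "x \<in> A ` {- int d..int d} \<union> S ` {..d}"
    proof (cases x)
      case (A i)
      then have "i \<in> {- int d..int d}" using x by simp arith
      then show ?thesis using A by blast
    next
      case (S j) then show ?thesis using x by auto
    next
      case (P t h) then show ?thesis using x by auto
    qed
  qed
qed simp

theorem corollary1p6:
  assumes "(2::'a::field) \<noteq> 0" and "(3::'a) \<noteq> 0"
  shows "(\<forall>I::(hidx \<Rightarrow> 'a) set. is_ideal I \<longrightarrow> (fin_codim I Hvec \<longleftrightarrow> \<not> I \<subseteq> Jid))
       \<and> (\<forall>I::(hidx \<Rightarrow> 'a) set. is_ideal I \<and> I \<noteq> {0} \<and> I \<subseteq> Jid \<longrightarrow> fin_codim I Jid)"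
proof -
  note two = assms(1) and three = assms(2)
  have J: "(Jid :: (hidx \<Rightarrow> 'a) set) = Pspace" by (rule Jid_eq)
  define FP where "FP D = {x. \<exists>t h. x = P t h \<and> valid_idx x \<and> h \<le> D}" for D
  define FAS where "FAS d = {x. valid_idx x \<and> isAS x \<and> muAS x \<le> d}" for d
  have indP: "ind (P t h) \<in> (Pspace :: (hidx \<Rightarrow> 'a) set)" if "valid_idx (P t h)" for t h
    using that by (simp add: Pspace_def ind_Hvec, simp add: ind_def)
  have part2: "fin_codim I Pspace" if I: "is_ideal I" and I0: "I \<noteq> {0}" and IP: "I \<subseteq> Pspace"
    for I :: "(hidx \<Rightarrow> 'a) set"
  proof -
    obtain f0 where f0: "f0 \<in> I" "f0 \<noteq> 0" using I0 I by (auto simp: is_ideal_def)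
    obtain D where hD: "\<forall>Q. subsp Q \<longrightarrow> I \<subseteq> Q \<longrightarrow> (\<forall>t h. valid_idx (P t h) \<and> h \<le> D \<longrightarrow> ind (P t h) \<in> Q)
           \<longrightarrow> (\<forall>t h. valid_idx (P t h) \<longrightarrow> ind (P t h) \<in> Q)"
      using P_tri[OF two three IP ideal_subsp[OF I] ideal_mult[OF I] f0] by blast
    let ?Q = "Qset I (ind ` FP D)"
    have Qs: "subsp ?Q" using Qset_subsp ideal_subsp[OF I] by blast
    have IQ: "I \<subseteq> ?Q" using Qset_I ideal_subsp[OF I] by blast
    have finB: "finite (ind ` FP D)" using finFP by (simp add: FP_def)
    have base: "\<forall>t h. valid_idx (P t h) \<and> h \<le> D \<longrightarrow> ind (P t h) \<in> ?Q"
      using Qset_B[OF ideal_subsp[OF I] finB] by (auto simp: FP_def)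
    have allP: "\<forall>t h. valid_idx (P t h) \<longrightarrow> ind (P t h) \<in> ?Q" using hD Qs IQ base by blast
    show ?thesis
    proof (rule codim_lemma[OF I])
      show "finite (FP D)" using finFP by (simp add: FP_def)
      show "\<forall>x\<in>FP D. valid_idx x" by (auto simp: FP_def)
      have allv: "ind v \<in> ?Q" if w: "w \<in> Pspace" and wv: "w v \<noteq> 0" for w :: "hidx \<Rightarrow> 'a" and v
      proof -
        obtain t h where v: "v = P t h" using Pspace_supp[OF w wv] by blast
        have "valid_idx v" using w wv Hvec_valid by (auto simp: Pspace_def)
        then show "ind v \<in> ?Q" using allP v by blast
      qed
      show "Pspace \<subseteq> (Hvec :: (hidx \<Rightarrow> 'a) set)" by (auto simp: Pspace_def)
      show "ind v \<in> ?Q" if "w \<in> Pspace" "w v \<noteq> 0" for w :: "hidx \<Rightarrow> 'a" and v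
        using allv[OF that] .
      show "ind ` FP D \<subseteq> (Pspace :: (hidx \<Rightarrow> 'a) set)"
      proof
        fix y :: "hidx \<Rightarrow> 'a" assume "y \<in> ind ` FP D"
        then obtain x where x: "x \<in> FP D" "y = ind x" by blast
        then obtain t h where th: "x = P t h" "valid_idx (P t h)" by (auto simp: FP_def)
        show "y \<in> Pspace" using indP[OF th(2)] x(2) th(1) by simp
      qed
    qed
  qed
  have part1: "fin_codim I Hvec" if I: "is_ideal I" and nIP: "\<not> I \<subseteq> Pspace" for I :: "(hidx \<Rightarrow> 'a) set"
  proof -
    obtain f where f: "f \<in> I" "f \<notin> Pspace" using nIP by blast
    obtain G where G: "G \<in> I" "\<forall>i. G (A i) = 0" "\<exists>j. G (S j) \<noteq> 0"
      using getG0[OF two three I f] by blast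
    obtain j0 where j0: "G (S j0) \<noteq> 0" using G(3) by blast
    obtain f1 where f1: "f1 \<in> I" "f1 \<in> Pspace" "f1 \<noteq> 0" using getJ[OF two three I G(1,2) j0] by blast
    let ?K = "I \<inter> Pspace"
    have KP: "?K \<subseteq> Pspace" by blast
    have Ks: "subsp ?K" using ideal_subsp[OF I] ideal_subsp[OF Pspace_ideal] by (auto simp: subsp_def)
    have Km: "hmult (ind y) g \<in> ?K" if "g \<in> ?K" "valid_idx y" for g y
      using that ideal_mult[OF I] hmult_Pspace by blast
    obtain D where hD: "\<forall>Q. subsp Q \<longrightarrow> ?K \<subseteq> Q \<longrightarrow> (\<forall>t h. valid_idx (P t h) \<and> h \<le> D \<longrightarrow> ind (P t h) \<in> Q)
           \<longrightarrow> (\<forall>t h. valid_idx (P t h) \<longrightarrow> ind (P t h) \<in> Q)"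
      using P_tri[OF two three KP Ks Km, of f1] f1 by blast
    have GH: "G \<in> Hvec" using I G(1) by (rule ideal_Hvec)
    define d where "d = Max {j. G (S j) \<noteq> 0}"
    have fin: "finite {j. G (S j) \<noteq> 0}" using GH fin_pre injS by blast
    have Gd: "G (S d) \<noteq> 0" unfolding d_def using Max_in[OF fin] j0 by auto
    have dge: "\<forall>l. G (S l) \<noteq> 0 \<longrightarrow> l \<le> d" unfolding d_def using Max_ge[OF fin] by auto
    define F where "F = FP D \<union> FAS d"
    let ?Q = "Qset I (ind ` F)"
    have finF: "finite F" using finFP finFAS by (simp add: F_def FP_def FAS_def)
    have finB: "finite (ind ` F)" using finF by simp
    have Qs: "subsp ?Q" using Qset_subsp ideal_subsp[OF I] by blast
    have IQ: "I \<subseteq> ?Q" using Qset_I ideal_subsp[OF I] by blast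
    have baseP: "\<forall>t h. valid_idx (P t h) \<and> h \<le> D \<longrightarrow> ind (P t h) \<in> ?Q"
      using Qset_B[OF ideal_subsp[OF I] finB] by (auto simp: F_def FP_def)
    have allP: "\<forall>t h. valid_idx (P t h) \<longrightarrow> ind (P t h) \<in> ?Q" using hD Qs IQ baseP by blast
    have baseAS: "\<forall>x. valid_idx x \<and> isAS x \<and> muAS x \<le> d \<longrightarrow> ind x \<in> ?Q"
      using Qset_B[OF ideal_subsp[OF I] finB] by (auto simp: F_def FAS_def)
    have allAS: "ind x \<in> ?Q" if "valid_idx x" "isAS x" for x
      by (rule AS_tri[OF two three I G(1,2) Gd dge Qs IQ allP baseAS that])
    show ?thesis
    proof (rule codim_lemma[OF I finF])
      show "\<forall>x\<in>F. valid_idx x" by (auto simp: F_def FP_def FAS_def)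
      show "Hvec \<subseteq> (Hvec :: (hidx \<Rightarrow> 'a) set)" by simp
      show "ind v \<in> ?Q" if w: "w \<in> Hvec" and wv: "w v \<noteq> 0" for w :: "hidx \<Rightarrow> 'a" and v
      proof -
        have vv: "valid_idx v" using Hvec_valid[OF w wv] .
        show "ind v \<in> ?Q"
        proof (cases v)
          case (P t h) then show ?thesis using allP vv by blast
        next
          case (A i) then show ?thesis using allAS vv by simp
        next
          case (S j) then show ?thesis using allAS vv by simp
        qed
      qed
      show "ind ` F \<subseteq> (Hvec :: (hidx \<Rightarrow> 'a) set)" using ind_Hvec by (auto simp: F_def FP_def FAS_def)
    qed
  qed
  show ?thesis
  proof (intro conjI allI impI)
    fix I :: "(hidx \<Rightarrow> 'a) set" assume I: "is_ideal I"
    show "fin_codim I Hvec \<longleftrightarrow> \<not> I \<subseteq> Jid"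
      unfolding J using part1[OF I] notfin[OF I] by blast
  next
    fix I :: "(hidx \<Rightarrow> 'a) set" assume "is_ideal I \<and> I \<noteq> {0} \<and> I \<subseteq> Jid"
    then show "fin_codim I Jid" unfolding J using part2 by blast
  qed
qed


end
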